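(* Let $q\in(0,1)$ and consider an SC6V model on a skew domain $P-Q$. Let $\mathcal A=(\alpha_1,\dots,\alpha_k)$, $\mathcal B=(\beta_1,\dots,\beta_k)\in(\mathbb{Z}+\frac12)^k$ and $\mathbf c=(c_1,\dots,c_k)\in\mathbb{Z}^k$ satisfy, for some $r,t\ge1$, $$\alpha_1\le\dots\le\alpha_{r-1}<\alpha=\alpha_r=\dots=\alpha_{r+t-1}<\alpha_{r+t}\le\dots\le\alpha_k,$$ $$\beta_1\ge\dots\ge\beta_{r-1}>\beta=\beta_r=\dots=\beta_{r+t-1}>\beta_{r+t}\ge\dots\ge\beta_k,\qquad c_1\le\dots\le c_k.$$ Assume all points $(\alpha_i,\beta_i)$ lie in the region $P-Q$, as does the vertex $v=(\alpha-\frac12,\beta-\frac12)$, and let $z$ be the spectral parameter of $v$. Then for every $[r,r+t-1]$-ordered permutation $\pi\in S_k$, $$q^{l(\pi)}\mathbb E\big[q^{\mathcal H^{(\mathcal A,\mathcal B)}_{\pi.\mathbf c}}\big]=\frac{q-q^tz}{q-z}q^{l(\pi)}\mathbb E\big[q^{\mathcal H^{(\mathcal A,\mathcal B-\mathbf e^{[r,r+t-1]})}_{\pi.\mathbf c}}\big]+\sum_{i=0}^{t-1}\frac{qz-1}{q-z}q^{l(\sigma^+_{[r,r+i]}\pi)}\mathbb E\big[q^{\mathcal H^{(\mathcal A-\mathbf e^r,\mathcal B-\mathbf e^{[r,r+t-1]})}_{\sigma^+_{[r,r+i]}\pi.\mathbf c}}\big]+\sum_{i=0}^{t-1}\frac{1-z}{q-z}q^{l(\sigma^+_{[r,r+i]}\pi)}\mathbb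 E\big[q^{\mathcal H^{(\mathcal A-\mathbf e^r,\mathcal B-\mathbf e^{[r+1,r+t-1]})}_{\sigma^+_{[r,r+i]}\pi.\mathbf c}}\big].$$
   Context: SC6V weights: colors $\{0,\dots,n\}$ ($0$ = no path); a vertex with incoming bottom $i$, left $j$, outgoing top $k$, right $l$ has weight $R_z(i,j;k,l)$ where, for $0\le i<j\le n$: $R_z(i,i;i,i)=1$, $R_z(j,i;j,i)=\frac{q(z-1)}{z-q}$, $R_z(j,i;i,j)=\frac{z(1-q)}{z-q}$, $R_z(i,j;i,j)=\frac{z-1}{z-q}$, $R_z(i,j;j,i)=\frac{1-q}{z-q}$, others $0$. Setting: lattice vertices $(a,b)$ ($a$ column, $b$ row), dual points in $(\mathbb{Z}+\frac12)^2$. $Q\le P$ are up-left paths (steps $(-1,0)$ or $(0,+1)$) with common endpoints, $Q$ weakly down-left of $P$; $P-Q$ is the set of lattice vertices between them with adjacent edges. Incoming edges (crossing steps of $Q$) are colored by a weakly increasing coloring of the steps of $Q$ (from its first point $Q_0$). Each row and column has a rapidity; a vertex's spectral parameter is (row rapidity)/(column rapidity). The model is the (possibly complex-valued) probability measure on configurations with weight the product of vertex weights. Height function: $h^{Q_0}_{>c}=0$; if the edge separating $(\alpha,\beta),(\alpha+1,\beta)$ has color $i$, $h^{(\alpha+1,\beta)}_{>c}=h^{(\alpha,\beta)}_{>c}-\mathbb 1_{i>c}$; if the edge separating $(\alpha,\beta),(\alpha,\beta+1)$ has color $i$, $h^{(\alpha,\beta+1)}_{>c}=h^{(\alpha,\beta)}_{>c}+\mathbb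 1_{i>c}$. Notation: $\mathcal H^{(\mathcal A,\mathcal B)}_{(d_1,\dots,d_k)}=\sum_{i=1}^kh^{(\alpha_i,\beta_i)}_{>d_i}$. For $\pi\in S_k$, $\pi.(d_1,\dots,d_k)=(d_{\pi^{-1}(1)},\dots,d_{\pi^{-1}(k)})$; products of permutations are compositions. $\sigma_i$ is the transposition of $i,i+1$; $l(\pi)$ is the length (minimal number of $\sigma_i$'s). $\sigma^+_{[a,b]}=\sigma_a\sigma_{a+1}\cdots\sigma_{b-1}$ ($=\mathrm{id}$ if $a=b$). $\pi$ is $[a,b]$-ordered if $\pi^{-1}(i)<\pi^{-1}(j)$ for all $a\le i<j\le b$. $\mathbf e^i$ is the $i$-th standard basis vector of $\mathbb{Z}^k$ and $\mathbf e^{[a,b]}=\sum_{i=a}^b\mathbf e^i$ ($=0$ if $a>b$). *)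

theory Defs
  imports Complex_Main "HOL-Combinatorics.Permutations"
begin

(* Lattice vertices are integer points (x,y) (x = column, y = row).
   A dual point (alpha,beta) in (Z+1/2)^2 is encoded by the integer pair
   (a,b) with alpha = a + 1/2, beta = b + 1/2; i.e. a "face" is named by
   its lower-left lattice vertex.  Hence the vertex (alpha-1/2, beta-1/2)
   is the integer pair (a,b) itself.
   ------------------------------------------------------------------- *)

(* VE x y : vertical lattice edge from vertex (x,y) to (x,y+1)
   HE x y : horizontal lattice edge from vertex (x,y) to (x+1,y) *)
datatype edge = VE int int | HE int int

(* SC6V vertex weight R_z(i,j;k,l): bottom-in i, left-in j, top-out k, right-out l *)
definition R :: "complex \<Rightarrow> complex \<Rightarrow> nat \<Rightarrow> nat \<Rightarrow> nat \<Rightarrow> nat \<Rightarrow> complex" where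
  "R z q i j k l =
     (if i = j \<and> k = i \<and> l = i then 1
      else if j < i \<and> k = i \<and> l = j then q * (z - 1) / (z - q)
      else if j < i \<and> k = j \<and> l = i then z * (1 - q) / (z - q)
      else if i < j \<and> k = i \<and> l = j then (z - 1) / (z - q)
      else if i < j \<and> k = j \<and> l = i then (1 - q) / (z - q)
      else 0)"

definition up_left_path :: "(int \<times> int) list \<Rightarrow> bool" where
  "up_left_path L \<longleftrightarrow> L \<noteq> [] \<and>
     (\<forall>j. Suc j < length L \<longrightarrow>
        (fst (L ! Suc j) = fst (L ! j) - 1 \<and> snd (L ! Suc j) = snd (L ! j)) \<or>
        (fst (L ! Suc j) = fst (L ! j) \<and> snd (L ! Suc j) = snd (L ! j) + 1))"

definition col_hi :: "(int \<times> int) list \<Rightarrow> int \<Rightarrow> int" where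
  "col_hi L a = Max {y. (a, y) \<in> set L}"

definition col_lo :: "(int \<times> int) list \<Rightarrow> int \<Rightarrow> int" where
  "col_lo L a = Min {y. (a, y) \<in> set L}"

definition skew_domain :: "(int \<times> int) list \<Rightarrow> (int \<times> int) list \<Rightarrow> bool" where
  "skew_domain P Q \<longleftrightarrow> up_left_path P \<and> up_left_path Q \<and>
     hd P = hd Q \<and> last P = last Q \<and>
     (\<forall>a. fst (last Q) \<le> a \<and> a \<le> fst (hd Q) \<longrightarrow> col_hi Q a \<le> col_hi P a)"

(* the lattice edge crossed by the j-th step of a path (from L!j to L!(j+1)) *)
definition step_edge :: "(int \<times> int) list \<Rightarrow> nat \<Rightarrow> edge" where
  "step_edge L j =
     (if snd (L ! Suc j) = snd (L ! j) then VE (fst (L ! j)) (snd (L ! j))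
      else HE (fst (L ! j)) (snd (L ! j) + 1))"

definition region_vertices :: "(int \<times> int) list \<Rightarrow> (int \<times> int) list \<Rightarrow> (int \<times> int) set" where
  "region_vertices P Q = {(x, y). fst (last Q) < x \<and> x \<le> fst (hd Q) \<and>
                                   col_hi Q x < y \<and> y \<le> col_hi P x}"

definition region_faces :: "(int \<times> int) list \<Rightarrow> (int \<times> int) list \<Rightarrow> (int \<times> int) set" where
  "region_faces P Q = {(a, b). fst (last Q) \<le> a \<and> a \<le> fst (hd Q) \<and>
                                col_lo Q a \<le> b \<and> b \<le> col_hi P a}"

definition vertex_edges :: "int \<times> int \<Rightarrow> edge set" where
  "vertex_edges v = {VE (fst v) (snd v - 1), HE (fst v - 1) (snd v), VE (fst v) (snd v), HE (fst v) (snd v)}"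

definition model_edges :: "(int \<times> int) list \<Rightarrow> (int \<times> int) list \<Rightarrow> edge set" where
  "model_edges P Q = (\<Union>v\<in>region_vertices P Q. vertex_edges v) \<union>
                     {step_edge Q j | j. Suc j < length Q}"

definition configs :: "nat \<Rightarrow> (int \<times> int) list \<Rightarrow> (int \<times> int) list \<Rightarrow> (nat \<Rightarrow> nat) \<Rightarrow> (edge \<Rightarrow> nat) set" where
  "configs n P Q bc = {cfg. (\<forall>e. e \<notin> model_edges P Q \<longrightarrow> cfg e = 0) \<and>
                            (\<forall>e\<in>model_edges P Q. cfg e \<le> n) \<and>
                            (\<forall>j. Suc j < length Q \<longrightarrow> cfg (step_edge Q j) = bc j)}"

(* weight of a configuration: product of vertex weights; the spectral parameter of
   vertex (x,y) is (row rapidity u y) / (column rapidity w x) *)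
definition cfg_weight :: "real \<Rightarrow> (int \<Rightarrow> complex) \<Rightarrow> (int \<Rightarrow> complex) \<Rightarrow>
    (int \<times> int) list \<Rightarrow> (int \<times> int) list \<Rightarrow> (edge \<Rightarrow> nat) \<Rightarrow> complex" where
  "cfg_weight q u w P Q cfg =
     (\<Prod>v\<in>region_vertices P Q.
        R (u (snd v) / w (fst v)) (complex_of_real q)
          (cfg (VE (fst v) (snd v - 1))) (cfg (HE (fst v - 1) (snd v)))
          (cfg (VE (fst v) (snd v))) (cfg (HE (fst v) (snd v))))"

definition sc6v_expect :: "nat \<Rightarrow> real \<Rightarrow> (int \<Rightarrow> complex) \<Rightarrow> (int \<Rightarrow> complex) \<Rightarrow>
    (int \<times> int) list \<Rightarrow> (int \<times> int) list \<Rightarrow> (nat \<Rightarrow> nat) \<Rightarrow> ((edge \<Rightarrow> nat) \<Rightarrow> complex) \<Rightarrow> complex" where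
  "sc6v_expect n q u w P Q bc F = (\<Sum>cfg\<in>configs n P Q bc. cfg_weight q u w P Q cfg * F cfg)"

(* height function h^{(a,b)}_{>c}: h^{Q_0} = 0, computed by walking along Q from Q_0
   (each crossed step of Q contributes 1_{colour > c}) until the lowest point
   (a, col_lo Q a) of Q in column a, then walking straight up to (a,b) (each
   crossed horizontal edge HE a (y+1) contributes 1_{colour > c}).  This is the
   path-summation of the defining relations of the height function. *)
definition height :: "(int \<times> int) list \<Rightarrow> (nat \<Rightarrow> nat) \<Rightarrow> (edge \<Rightarrow> nat) \<Rightarrow> int \<times> int \<Rightarrow> int \<Rightarrow> nat" where
  "height Q bc cfg p c =
     card {j. Suc j < length Q \<and> fst p < fst (Q ! j) \<and> c < int (bc j)} +
     card {y. col_lo Q (fst p) \<le> y \<and> y < snd p \<and> c < int (cfg (HE (fst p) (y + 1)))}"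

definition HH :: "(int \<times> int) list \<Rightarrow> (nat \<Rightarrow> nat) \<Rightarrow> (edge \<Rightarrow> nat) \<Rightarrow> nat \<Rightarrow>
    (nat \<Rightarrow> int) \<Rightarrow> (nat \<Rightarrow> int) \<Rightarrow> (nat \<Rightarrow> int) \<Rightarrow> nat" where
  "HH Q bc cfg k A B d = (\<Sum>i=1..k. height Q bc cfg (A i, B i) (d i))"

definition EqH :: "nat \<Rightarrow> real \<Rightarrow> (int \<Rightarrow> complex) \<Rightarrow> (int \<Rightarrow> complex) \<Rightarrow>
    (int \<times> int) list \<Rightarrow> (int \<times> int) list \<Rightarrow> (nat \<Rightarrow> nat) \<Rightarrow> nat \<Rightarrow>
    (nat \<Rightarrow> int) \<Rightarrow> (nat \<Rightarrow> int) \<Rightarrow> (nat \<Rightarrow> int) \<Rightarrow> complex" where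
  "EqH n q u w P Q bc k A B d =
     sc6v_expect n q u w P Q bc (\<lambda>cfg. complex_of_real q ^ HH Q bc cfg k A B d)"

definition perm_act :: "(nat \<Rightarrow> nat) \<Rightarrow> (nat \<Rightarrow> 'a) \<Rightarrow> nat \<Rightarrow> 'a" where
  "perm_act \<pi> d = (\<lambda>i. d (inv \<pi> i))"

definition sig :: "nat \<Rightarrow> nat \<Rightarrow> nat" where
  "sig i = Transposition.transpose i (Suc i)"

definition perm_length :: "nat \<Rightarrow> (nat \<Rightarrow> nat) \<Rightarrow> nat" where
  "perm_length k \<pi> = (LEAST m. \<exists>xs. length xs = m \<and> set xs \<subseteq> {1..<k} \<and>
                                     \<pi> = foldr (\<lambda>i f. sig i \<circ> f) xs id)"

fun sigma_plus :: "nat \<Rightarrow> nat \<Rightarrow> nat \<Rightarrow> nat" where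
  "sigma_plus a b = (if b \<le> a then id else sigma_plus a (b - 1) \<circ> sig (b - 1))"

definition ordered_on :: "nat \<Rightarrow> nat \<Rightarrow> (nat \<Rightarrow> nat) \<Rightarrow> bool" where
  "ordered_on a b \<pi> \<longleftrightarrow> (\<forall>i j. a \<le> i \<and> i < j \<and> j \<le> b \<longrightarrow> inv \<pi> i < inv \<pi> j)"

definition ebox :: "nat \<Rightarrow> nat \<Rightarrow> nat \<Rightarrow> int" where
  "ebox a b i = (if a \<le> i \<and> i \<le> b then 1 else 0)"

end

theory Submission
  imports Defs
begin

lemma gp_mult: "((x::complex) - 1) * (\<Sum>i<N. x^i) = x^N - 1"
  by (induction N) (auto simp: algebra_simps)

lemma sum_one_ind:
  fixes Q :: complex
  assumes "N \<le> t"
  shows "(\<Sum>i<t. Q^i * Q^(if i < N then 1 else 0)) = (\<Sum>i<t. Q^i) + (Q^N - 1)"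
proof -
  have "(\<Sum>i<t. Q^i * Q^(if i < N then 1 else 0)) = (\<Sum>i<t. Q^i + (if i < N then (Q - 1) * Q^i else 0))"
    by (rule sum.cong) (auto simp: algebra_simps)
  also have "\<dots> = (\<Sum>i<t. Q^i) + (\<Sum>i<t. (if i < N then (Q - 1) * Q^i else 0))"
    by (simp add: sum.distrib)
  also have "(\<Sum>i<t. (if i < N then (Q - 1) * Q^i else 0)) = (\<Sum>i<N. (Q - 1) * Q^i)"
  proof -
    have "(\<Sum>i<t. (if i < N then (Q - 1) * Q^i else 0)) = (\<Sum>i\<in>{..<t} \<inter> {i. i < N}. (Q - 1) * Q^i)"
      by (simp add: sum.inter_restrict)
    also have "{..<t} \<inter> {i. i < N} = {..<N}" using assms by auto
    finally show ?thesis by simp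
  qed
  also have "\<dots> = Q^N - 1" by (simp add: gp_mult flip: sum_distrib_left)
  finally show ?thesis .
qed

lemma sum_two_ind:
  fixes Q :: complex
  assumes "Na \<le> Nb" "Nb \<le> t"
  shows "(\<Sum>i<t. Q^i * Q^((if i < Na then 1 else 0) + (if i < Nb then 1 else 0)))
     = (\<Sum>i<t. Q^i) + (Q^Nb - 1) + Q * (Q^Na - 1)"
proof -
  have "(\<Sum>i<t. Q^i * Q^((if i < Na then 1 else 0) + (if i < Nb then 1 else 0)))
     = (\<Sum>i<t. Q^i + (if i < Nb then (Q - 1) * Q^i else 0) + (if i < Na then Q * ((Q - 1) * Q^i) else 0))"
    by (rule sum.cong) (use assms in \<open>auto simp: algebra_simps power2_eq_square\<close>)
  also have "\<dots> = (\<Sum>i<t. Q^i) + (\<Sum>i<t. (if i < Nb then (Q - 1) * Q^i else 0))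
        + (\<Sum>i<t. (if i < Na then Q * ((Q - 1) * Q^i) else 0))"
    by (simp add: sum.distrib)
  also have "(\<Sum>i<t. (if i < Nb then (Q - 1) * Q^i else 0)) = (\<Sum>i<Nb. (Q - 1) * Q^i)"
  proof -
    have "(\<Sum>i<t. (if i < Nb then (Q - 1) * Q^i else 0)) = (\<Sum>i\<in>{..<t} \<inter> {i. i < Nb}. (Q - 1) * Q^i)"
      by (simp add: sum.inter_restrict)
    also have "{..<t} \<inter> {i. i < Nb} = {..<Nb}" using assms by auto
    finally show ?thesis by simp
  qed
  also have "(\<Sum>i<t. (if i < Na then Q * ((Q - 1) * Q^i) else 0)) = (\<Sum>i<Na. Q * ((Q - 1) * Q^i))"
  proof -
    have "(\<Sum>i<t. (if i < Na then Q * ((Q - 1) * Q^i) else 0)) = (\<Sum>i\<in>{..<t} \<inter> {i. i < Na}. Q * ((Q - 1) * Q^i))"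
      by (simp add: sum.inter_restrict)
    also have "{..<t} \<inter> {i. i < Na} = {..<Na}" using assms by auto
    finally show ?thesis by simp
  qed
  also have "(\<Sum>i<Nb. (Q - 1) * Q^i) = Q^Nb - 1" by (simp add: gp_mult flip: sum_distrib_left)
  also have "(\<Sum>i<Na. Q * ((Q - 1) * Q^i)) = Q * (Q^Na - 1)" by (simp add: gp_mult flip: sum_distrib_left)
  finally show ?thesis .
qed

lemma sorted_prefix:
  fixes d :: "nat \<Rightarrow> int"
  assumes "\<forall>i j. i \<le> j \<and> j < t \<longrightarrow> d i \<le> d j"
  shows "\<exists>N\<le>t. \<forall>i<t. (d i < x \<longleftrightarrow> i < N)"
  using assms
proof (induction t)
  case 0 then show ?case by auto
next
  case (Suc t)
  then obtain N where N: "N \<le> t" "\<forall>i<t. (d i < x \<longleftrightarrow> i < N)" by force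
  show ?case
  proof (cases "d t < x")
    case True
    then have "\<forall>i<Suc t. d i < x" using Suc.prems by (metis le_less_trans less_Suc_eq_le order.strict_implies_order lessI)
    then show ?thesis by (intro exI[of _ "Suc t"]) auto
  next
    case False
    then show ?thesis using N by (intro exI[of _ N]) (auto simp: less_Suc_eq)
  qed
qed

definition Nf :: "nat \<Rightarrow> (nat \<Rightarrow> int) \<Rightarrow> int \<Rightarrow> nat" where
  "Nf t d x = card {i. i < t \<and> d i < x}"

lemma Nf_char:
  fixes d :: "nat \<Rightarrow> int"
  assumes "\<forall>i j. i \<le> j \<and> j < t \<longrightarrow> d i \<le> d j"
  shows "Nf t d x \<le> t \<and> (\<forall>i<t. (d i < x \<longleftrightarrow> i < Nf t d x))"
proof -
  obtain N where N: "N \<le> t" "\<forall>i<t. (d i < x \<longleftrightarrow> i < N)" using sorted_prefix[OF assms] by blast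
  have "{i. i < t \<and> d i < x} = {..<N}" using N by auto
  then have "Nf t d x = N" by (simp add: Nf_def)
  then show ?thesis using N by simp
qed

lemma Nf_mono:
  assumes "x \<le> y" shows "Nf t d x \<le> Nf t d y"
  unfolding Nf_def by (rule card_mono) (use assms in auto)

definition Br :: "complex \<Rightarrow> complex \<Rightarrow> nat \<Rightarrow> complex \<Rightarrow> nat \<Rightarrow> nat \<Rightarrow> nat \<Rightarrow> nat \<Rightarrow> complex" where
  "Br Q z t G Nl Ni Nm Nx =
     Q ^ Nl - (Q - Q ^ t * z) / (Q - z)
     - (Q * z - 1) / (Q - z) * (G + Q ^ Ni - 1)
     - (1 - z) / (Q - z) * (G + Q ^ Nx - 1 + Q * (Q ^ Nm - 1))"

lemma core_gen:
  fixes Q z G qt a b :: complex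
  assumes "z \<noteq> Q" "Q \<noteq> 1" "G = (qt - 1) / (Q - 1)"
  shows "a - (Q - qt * z) / (Q - z) - (Q * z - 1) / (Q - z) * (G + a - 1)
           - (1 - z) / (Q - z) * (G + a - 1 + Q * (a - 1)) = 0"
    and "Q * (z - 1) / (z - Q) * (b - (Q - qt * z) / (Q - z) - (Q * z - 1) / (Q - z) * (G + a - 1)
           - (1 - z) / (Q - z) * (G + a - 1 + Q * (b - 1)))
       + z * (1 - Q) / (z - Q) * (a - (Q - qt * z) / (Q - z) - (Q * z - 1) / (Q - z) * (G + a - 1)
           - (1 - z) / (Q - z) * (G + a - 1 + Q * (b - 1))) = 0"
    and "(z - 1) / (z - Q) * (b - (Q - qt * z) / (Q - z) - (Q * z - 1) / (Q - z) * (G + a - 1)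
           - (1 - z) / (Q - z) * (G + b - 1 + Q * (a - 1)))
       + (1 - Q) / (z - Q) * (a - (Q - qt * z) / (Q - z) - (Q * z - 1) / (Q - z) * (G + a - 1)
           - (1 - z) / (Q - z) * (G + b - 1 + Q * (a - 1))) = 0"
proof -
  obtain c where c: "z = Q - c" "c \<noteq> 0" using assms(1) by (intro that[of "Q - z"]) auto
  obtain e where e: "Q = e + 1" "e \<noteq> 0" using assms(2) by (intro that[of "Q - 1"]) auto
  have G: "G = (qt - 1) / e" using assms(3) e by simp
  show "a - (Q - qt * z) / (Q - z) - (Q * z - 1) / (Q - z) * (G + a - 1)
           - (1 - z) / (Q - z) * (G + a - 1 + Q * (a - 1)) = 0"
    unfolding G c(1) e(1) using c(2) e(2) by (simp add: field_simps, (simp add: algebra_simps)?)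
  show "Q * (z - 1) / (z - Q) * (b - (Q - qt * z) / (Q - z) - (Q * z - 1) / (Q - z) * (G + a - 1)
           - (1 - z) / (Q - z) * (G + a - 1 + Q * (b - 1)))
       + z * (1 - Q) / (z - Q) * (a - (Q - qt * z) / (Q - z) - (Q * z - 1) / (Q - z) * (G + a - 1)
           - (1 - z) / (Q - z) * (G + a - 1 + Q * (b - 1))) = 0"
    unfolding G c(1) e(1) using c(2) e(2) by (simp add: field_simps, (simp add: algebra_simps)?)
  show "(z - 1) / (z - Q) * (b - (Q - qt * z) / (Q - z) - (Q * z - 1) / (Q - z) * (G + a - 1)
           - (1 - z) / (Q - z) * (G + b - 1 + Q * (a - 1)))
       + (1 - Q) / (z - Q) * (a - (Q - qt * z) / (Q - z) - (Q * z - 1) / (Q - z) * (G + a - 1)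
           - (1 - z) / (Q - z) * (G + b - 1 + Q * (a - 1))) = 0"
    unfolding G c(1) e(1) using c(2) e(2) by (simp add: field_simps, (simp add: algebra_simps)?)
qed

lemma sum2_pts:
  fixes F :: "nat \<Rightarrow> nat \<Rightarrow> complex"
  assumes "S \<subseteq> {..n} \<times> {..n}" "\<forall>k l. (k, l) \<notin> S \<longrightarrow> F k l = 0"
  shows "(\<Sum>k\<le>n. \<Sum>l\<le>n. F k l) = (\<Sum>p\<in>S. F (fst p) (snd p))"
proof -
  have "(\<Sum>k\<le>n. \<Sum>l\<le>n. F k l) = (\<Sum>p\<in>{..n} \<times> {..n}. F (fst p) (snd p))"
    by (simp add: sum.cartesian_product split_def)
  also have "\<dots> = (\<Sum>p\<in>S. F (fst p) (snd p))"
    by (rule sum.mono_neutral_right) (use assms in auto)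
  finally show ?thesis .
qed

definition ind :: "nat \<Rightarrow> int \<Rightarrow> nat" where
  "ind x e = (if e < int x then 1 else 0)"

definition BrC :: "complex \<Rightarrow> complex \<Rightarrow> nat \<Rightarrow> (nat \<Rightarrow> int) \<Rightarrow> nat \<Rightarrow> nat \<Rightarrow> nat \<Rightarrow> complex" where
  "BrC Q z t d l i j =
     Q ^ Nf t d (int l) - (Q - Q ^ t * z) / (Q - z)
     - (\<Sum>m<t. (Q * z - 1) / (Q - z) * (Q ^ m * Q ^ ind i (d m)))
     - (\<Sum>m<t. (1 - z) / (Q - z) * (Q ^ m * Q ^ (ind i (d m) + ind j (d m))))"

lemma BrC_eval:
  fixes Q z :: complex
  assumes srt: "\<forall>i j. i \<le> j \<and> j < t \<longrightarrow> d i \<le> d j"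
  defines "G \<equiv> (\<Sum>m<t. Q ^ m)"
  shows "i \<le> j \<Longrightarrow> BrC Q z t d l i j = Q ^ Nf t d (int l) - (Q - Q ^ t * z) / (Q - z)
     - (Q * z - 1) / (Q - z) * (G + Q ^ Nf t d (int i) - 1)
     - (1 - z) / (Q - z) * (G + Q ^ Nf t d (int j) - 1 + Q * (Q ^ Nf t d (int i) - 1))"
    and "j \<le> i \<Longrightarrow> BrC Q z t d l i j = Q ^ Nf t d (int l) - (Q - Q ^ t * z) / (Q - z)
     - (Q * z - 1) / (Q - z) * (G + Q ^ Nf t d (int i) - 1)
     - (1 - z) / (Q - z) * (G + Q ^ Nf t d (int i) - 1 + Q * (Q ^ Nf t d (int j) - 1))"
proof -
  have ci: "Nf t d (int i) \<le> t \<and> (\<forall>m<t. (d m < int i \<longleftrightarrow> m < Nf t d (int i)))" using Nf_char[OF srt] by blast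
  have cj: "Nf t d (int j) \<le> t \<and> (\<forall>m<t. (d m < int j \<longleftrightarrow> m < Nf t d (int j)))" using Nf_char[OF srt] by blast
  have s1: "(\<Sum>m<t. (Q * z - 1) / (Q - z) * (Q ^ m * Q ^ ind i (d m)))
     = (Q * z - 1) / (Q - z) * (G + Q ^ Nf t d (int i) - 1)"
  proof -
    have "(\<Sum>m<t. Q ^ m * Q ^ ind i (d m)) = (\<Sum>m<t. Q ^ m * Q ^ (if m < Nf t d (int i) then 1 else 0))"
      by (rule sum.cong) (use ci in \<open>auto simp: ind_def\<close>)
    also have "\<dots> = G + (Q ^ Nf t d (int i) - 1)" unfolding G_def by (rule sum_one_ind) (use ci in auto)
    finally have e: "(\<Sum>m<t. Q ^ m * Q ^ ind i (d m)) = G + (Q ^ Nf t d (int i) - 1)" .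
    have "(\<Sum>m<t. (Q * z - 1) / (Q - z) * (Q ^ m * Q ^ ind i (d m))) = (Q * z - 1) / (Q - z) * (\<Sum>m<t. Q ^ m * Q ^ ind i (d m))"
      by (simp add: sum_distrib_left)
    then show ?thesis unfolding e by (simp add: add_diff_eq)
  qed
  have e1: "(\<Sum>m<t. Q ^ m * Q ^ ind i (d m)) = G + Q ^ Nf t d (int i) - 1"
  proof -
    have "(\<Sum>m<t. Q ^ m * Q ^ ind i (d m)) = (\<Sum>m<t. Q ^ m * Q ^ (if m < Nf t d (int i) then 1 else 0))"
      by (rule sum.cong) (use ci in \<open>auto simp: ind_def\<close>)
    also have "\<dots> = G + (Q ^ Nf t d (int i) - 1)" unfolding G_def by (rule sum_one_ind) (use ci in auto)
    finally show ?thesis by (simp add: add_diff_eq)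
  qed
  have dd: "(\<Sum>m<t. Q ^ m * Q ^ (ind i (d m) + ind j (d m)))
     = (\<Sum>m<t. Q ^ m * Q ^ ((if m < Nf t d (int i) then 1 else 0) + (if m < Nf t d (int j) then 1 else 0)))"
    by (rule sum.cong) (use ci cj in \<open>auto simp: ind_def\<close>)
  show "i \<le> j \<Longrightarrow> BrC Q z t d l i j = Q ^ Nf t d (int l) - (Q - Q ^ t * z) / (Q - z)
     - (Q * z - 1) / (Q - z) * (G + Q ^ Nf t d (int i) - 1)
     - (1 - z) / (Q - z) * (G + Q ^ Nf t d (int j) - 1 + Q * (Q ^ Nf t d (int i) - 1))"
  proof -
    assume ij: "i \<le> j"
    have "(\<Sum>m<t. Q ^ m * Q ^ (ind i (d m) + ind j (d m))) = G + (Q ^ Nf t d (int j) - 1) + Q * (Q ^ Nf t d (int i) - 1)"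
      unfolding dd G_def by (rule sum_two_ind) (use ci cj Nf_mono[of "int i" "int j" t d] ij in auto)
    then show ?thesis unfolding BrC_def sum_distrib_left[symmetric]
      using e1 by (simp add: add_diff_eq)
  qed
  show "j \<le> i \<Longrightarrow> BrC Q z t d l i j = Q ^ Nf t d (int l) - (Q - Q ^ t * z) / (Q - z)
     - (Q * z - 1) / (Q - z) * (G + Q ^ Nf t d (int i) - 1)
     - (1 - z) / (Q - z) * (G + Q ^ Nf t d (int i) - 1 + Q * (Q ^ Nf t d (int j) - 1))"
  proof -
    assume ij: "j \<le> i"
    have "(\<Sum>m<t. Q ^ m * Q ^ (ind i (d m) + ind j (d m))) = (\<Sum>m<t. Q ^ m * Q ^ ((if m < Nf t d (int j) then 1 else 0) + (if m < Nf t d (int i) then 1 else 0)))"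
      unfolding dd by (simp add: add.commute)
    also have "\<dots> = G + (Q ^ Nf t d (int i) - 1) + Q * (Q ^ Nf t d (int j) - 1)"
      unfolding G_def by (rule sum_two_ind) (use ci cj Nf_mono[of "int j" "int i" t d] ij in auto)
    finally have "(\<Sum>m<t. Q ^ m * Q ^ (ind i (d m) + ind j (d m))) = G + (Q ^ Nf t d (int i) - 1) + Q * (Q ^ Nf t d (int j) - 1)" .
    then show ?thesis unfolding BrC_def sum_distrib_left[symmetric]
      using e1 by (simp add: add_diff_eq)
  qed
qed

lemma local_identity:
  fixes Q z :: complex
  assumes srt: "\<forall>i j. i \<le> j \<and> j < t \<longrightarrow> d i \<le> d j"
    and zQ: "z \<noteq> Q" and Q1: "Q \<noteq> 1" and ij: "i \<le> n" "j \<le> n"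
  shows "(\<Sum>k\<le>n. \<Sum>l\<le>n. R z Q i j k l * BrC Q z t d l i j) = 0"
proof -
  have G: "(\<Sum>m<t. Q ^ m) = (Q ^ t - 1) / (Q - 1)"
    using gp_mult[of Q t] Q1 by (simp add: field_simps)
  consider "i = j" | "j < i" | "i < j" by linarith
  then show ?thesis
  proof cases
    case 1
    have "(\<Sum>k\<le>n. \<Sum>l\<le>n. R z Q i j k l * BrC Q z t d l i j) = (\<Sum>p\<in>{(i,i)}. R z Q i j (fst p) (snd p) * BrC Q z t d (snd p) i j)"
      by (rule sum2_pts) (use ij 1 in \<open>auto simp: R_def\<close>)
    also have "\<dots> = BrC Q z t d i i i" using 1 by (simp add: R_def)
    also have "\<dots> = 0" unfolding BrC_eval(1)[OF srt order.refl]
      by (rule core_gen(1)[OF zQ Q1 G])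
    finally show ?thesis .
  next
    case 2
    have "(\<Sum>k\<le>n. \<Sum>l\<le>n. R z Q i j k l * BrC Q z t d l i j) = (\<Sum>p\<in>{(i,j),(j,i)}. R z Q i j (fst p) (snd p) * BrC Q z t d (snd p) i j)"
      by (rule sum2_pts) (use ij 2 in \<open>auto simp: R_def\<close>)
    also have "\<dots> = Q * (z - 1) / (z - Q) * BrC Q z t d j i j + z * (1 - Q) / (z - Q) * BrC Q z t d i i j"
      using 2 by (simp add: R_def)
    also have "\<dots> = 0"
      using 2 BrC_eval(2)[OF srt, where l=j and i=i and j=j] BrC_eval(2)[OF srt, where l=i and i=i and j=j]
        core_gen(2)[OF zQ Q1 G, where a="Q ^ Nf t d (int i)" and b="Q ^ Nf t d (int j)"]
      by simp
    finally show ?thesis .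
  next
    case 3
    have "(\<Sum>k\<le>n. \<Sum>l\<le>n. R z Q i j k l * BrC Q z t d l i j) = (\<Sum>p\<in>{(i,j),(j,i)}. R z Q i j (fst p) (snd p) * BrC Q z t d (snd p) i j)"
      by (rule sum2_pts) (use ij 3 in \<open>auto simp: R_def\<close>)
    also have "\<dots> = (z - 1) / (z - Q) * BrC Q z t d j i j + (1 - Q) / (z - Q) * BrC Q z t d i i j"
      using 3 by (simp add: R_def)
    also have "\<dots> = 0"
      using 3 BrC_eval(1)[OF srt, where l=j and i=i and j=j] BrC_eval(1)[OF srt, where l=i and i=i and j=j]
        core_gen(3)[OF zQ Q1 G, where a="Q ^ Nf t d (int i)" and b="Q ^ Nf t d (int j)"]
      by simp
    finally show ?thesis .
  qed
qed

declare sigma_plus.simps[simp del]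

lemma permutes_ident: "(\<lambda>a. a) permutes S"
  by (simp add: permutes_def)

definition invs :: "nat \<Rightarrow> (nat \<Rightarrow> nat) \<Rightarrow> (nat \<times> nat) set" where
  "invs k f = {(x, y). x \<in> {1..k} \<and> y \<in> {1..k} \<and> x < y \<and> f y < f x}"

definition ninv :: "nat \<Rightarrow> (nat \<Rightarrow> nat) \<Rightarrow> nat" where
  "ninv k f = card (invs k f)"

lemma invs_finite: "finite (invs k f)"
  by (rule finite_subset[of _ "{1..k} \<times> {1..k}"]) (auto simp: invs_def)

lemma sig_permutes: "1 \<le> j \<Longrightarrow> j < k \<Longrightarrow> sig j permutes {1..k}"
  unfolding sig_def by (rule permutes_swap_id) auto

lemma sig_sig: "sig j \<circ> sig j = id"
  by (auto simp: sig_def fun_eq_iff)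

lemma sig_order:
  assumes "u \<noteq> w" "\<not> (u = j \<and> w = Suc j)" "\<not> (w = j \<and> u = Suc j)"
  shows "(sig j u < sig j w) \<longleftrightarrow> (u < w)"
  using assms by (auto simp: sig_def Transposition.transpose_def)

lemma ninv_sig:
  assumes f: "f permutes {1..k}" and j: "1 \<le> j" "j < k"
  shows "inv f j < inv f (Suc j) \<Longrightarrow> ninv k (sig j \<circ> f) = Suc (ninv k f)"
    and "inv f (Suc j) < inv f j \<Longrightarrow> ninv k f = Suc (ninv k (sig j \<circ> f))"
proof -
  define x0 where "x0 = inv f j"
  define y0 where "y0 = inv f (Suc j)"
  have fx0: "f x0 = j" and fy0: "f y0 = Suc j" unfolding x0_def y0_def by (simp_all add: permutes_inverses[OF f])
  have x0in: "x0 \<in> {1..k}" using permutes_in_image[OF f, of x0] fx0 j by auto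
  have y0in: "y0 \<in> {1..k}" using permutes_in_image[OF f, of y0] fy0 j by auto
  have injf: "inj f" using permutes_inj[OF f] .
  have same: "(x, y) \<in> invs k (sig j \<circ> f) \<longleftrightarrow> (x, y) \<in> invs k f"
    if "(x, y) \<noteq> (x0, y0)" "(x, y) \<noteq> (y0, x0)" for x y
  proof -
    { assume xy: "x < y"
      have "f x \<noteq> f y" using xy injf by (metis inj_eq less_irrefl)
      moreover have "\<not> (f y = j \<and> f x = Suc j)"
        using that fx0 fy0 injf by (metis inj_eq)
      moreover have "\<not> (f x = j \<and> f y = Suc j)"
        using that fx0 fy0 injf by (metis inj_eq)
      ultimately have "(sig j (f y) < sig j (f x)) \<longleftrightarrow> (f y < f x)"
        by (intro sig_order) auto }
    then show ?thesis unfolding invs_def by auto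
  qed
  show "inv f j < inv f (Suc j) \<Longrightarrow> ninv k (sig j \<circ> f) = Suc (ninv k f)"
  proof -
    assume "inv f j < inv f (Suc j)"
    then have lt: "x0 < y0" unfolding x0_def y0_def .
    have "invs k (sig j \<circ> f) = insert (x0, y0) (invs k f)"
    proof (rule set_eqI)
      fix p :: "nat \<times> nat"
      obtain x y where p: "p = (x, y)" by force
      show "p \<in> invs k (sig j \<circ> f) \<longleftrightarrow> p \<in> insert (x0, y0) (invs k f)"
      proof (cases "(x, y) = (x0, y0) \<or> (x, y) = (y0, x0)")
        case True
        then show ?thesis using lt x0in y0in fx0 fy0 unfolding p invs_def
          by (auto simp: sig_def Transposition.transpose_def)
      next
        case False
        then show ?thesis using same[of x y] lt unfolding p by auto
      qed
    qed
    moreover have "(x0, y0) \<notin> invs k f" using fx0 fy0 by (auto simp: invs_def)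
    ultimately show ?thesis unfolding ninv_def using invs_finite by simp
  qed
  show "inv f (Suc j) < inv f j \<Longrightarrow> ninv k f = Suc (ninv k (sig j \<circ> f))"
  proof -
    assume "inv f (Suc j) < inv f j"
    then have lt: "y0 < x0" unfolding x0_def y0_def .
    have "invs k f = insert (y0, x0) (invs k (sig j \<circ> f))"
    proof (rule set_eqI)
      fix p :: "nat \<times> nat"
      obtain x y where p: "p = (x, y)" by force
      show "p \<in> invs k f \<longleftrightarrow> p \<in> insert (y0, x0) (invs k (sig j \<circ> f))"
      proof (cases "(x, y) = (x0, y0) \<or> (x, y) = (y0, x0)")
        case True
        then show ?thesis using lt x0in y0in fx0 fy0 unfolding p invs_def
          by (auto simp: sig_def Transposition.transpose_def)
      next
        case False
        then show ?thesis using same[of x y] lt unfolding p by auto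
      qed
    qed
    moreover have "(y0, x0) \<notin> invs k (sig j \<circ> f)" using fx0 fy0
      by (auto simp: invs_def sig_def Transposition.transpose_def)
    ultimately show ?thesis unfolding ninv_def using invs_finite by simp
  qed
qed

lemma inv_f_neq:
  assumes f: "f permutes {1..k}" and "j \<noteq> j'"
  shows "inv f j \<noteq> inv f j'"
  using assms by (metis permutes_inverses(1))

lemma ninv_sig_le:
  assumes f: "f permutes {1..k}" and j: "1 \<le> j" "j < k"
  shows "ninv k (sig j \<circ> f) \<le> Suc (ninv k f)"
proof (cases "inv f j < inv f (Suc j)")
  case True then show ?thesis using ninv_sig(1)[OF assms] by simp
next
  case False
  then have "inv f (Suc j) < inv f j" using inv_f_neq[OF f, of j "Suc j"] by auto
  then show ?thesis using ninv_sig(2)[OF assms] by simp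
qed

definition word :: "nat list \<Rightarrow> nat \<Rightarrow> nat" where
  "word xs = foldr (\<lambda>i f. sig i \<circ> f) xs id"

lemma word_props:
  assumes "set xs \<subseteq> {1..<k}"
  shows "word xs permutes {1..k} \<and> ninv k (word xs) \<le> length xs"
  using assms
proof (induction xs)
  case Nil
  have "invs k (\<lambda>a. a) = {}" by (auto simp: invs_def)
  then show ?case by (simp add: word_def ninv_def permutes_ident)
next
  case (Cons a xs)
  then have p: "word xs permutes {1..k}" and l: "ninv k (word xs) \<le> length xs" and a: "1 \<le> a" "a < k" by auto
  have w: "word (a # xs) = sig a \<circ> word xs" by (simp add: word_def)
  have "ninv k (sig a \<circ> word xs) \<le> Suc (length xs)" using ninv_sig_le[OF p a] l by linarith
  then show ?case unfolding w using permutes_compose[OF p sig_permutes[OF a]] by (simp only: length_Cons)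
qed

lemma strict_inc_perm_id:
  assumes g: "g permutes {1..k}" and inc: "\<forall>j. 1 \<le> j \<and> j < k \<longrightarrow> g j < g (Suc j)"
  shows "g = id"
proof -
  have ge: "m \<le> g m" if "1 \<le> m" "m \<le> k" for m
    using that
  proof (induction m)
    case 0 then show ?case by simp
  next
    case (Suc m)
    show ?case
    proof (cases "m = 0")
      case True
      then show ?thesis using permutes_in_image[OF g, of 1] Suc.prems by auto
    next
      case False
      then have "m \<le> g m" using Suc by auto
      moreover have "g m < g (Suc m)" using inc Suc.prems False by auto
      ultimately show ?thesis by simp
    qed
  qed
  have le: "g (k - i) \<le> k - i" if "i < k" for i
    using that
  proof (induction i)
    case 0
    then show ?case using permutes_in_image[OF g, of k] by auto
  next
    case (Suc i)
    then have "g (k - i) \<le> k - i" by auto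
    moreover have "g (k - Suc i) < g (Suc (k - Suc i))" using inc Suc.prems by auto
    moreover have "Suc (k - Suc i) = k - i" using Suc.prems by auto
    ultimately show ?case by auto
  qed
  show ?thesis
  proof (rule ext)
    fix m
    show "g m = id m"
    proof (cases "m \<in> {1..k}")
      case True
      then have "g m \<le> m" using le[of "k - m"] by auto
      then show ?thesis using ge True by fastforce
    next
      case False
      then show ?thesis using permutes_not_in[OF g] by auto
    qed
  qed
qed

lemma word_exists:
  "f permutes {1..k} \<Longrightarrow> \<exists>xs. length xs = ninv k f \<and> set xs \<subseteq> {1..<k} \<and> f = word xs"
proof (induction "ninv k f" arbitrary: f rule: less_induct)
  case less
  show ?case
  proof (cases "\<exists>j. 1 \<le> j \<and> j < k \<and> inv f (Suc j) < inv f j")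
    case False
    then have "\<forall>j. 1 \<le> j \<and> j < k \<longrightarrow> inv f j < inv f (Suc j)"
      using inv_f_neq[OF less.prems] by (metis linorder_neqE_nat n_not_Suc_n)
    then have "inv f = id" using strict_inc_perm_id[OF permutes_inv[OF less.prems]] by blast
    then have fid: "f = id" by (metis inv_id inv_inv_eq permutes_bij[OF less.prems])
    have "invs k id = {}" by (auto simp: invs_def)
    then show ?thesis using fid by (intro exI[of _ "[]"]) (simp add: word_def ninv_def)
  next
    case True
    then obtain j where j: "1 \<le> j" "j < k" "inv f (Suc j) < inv f j" by blast
    have e: "ninv k f = Suc (ninv k (sig j \<circ> f))" using ninv_sig(2)[OF less.prems j(1,2) j(3)] .
    have p: "sig j \<circ> f permutes {1..k}" using permutes_compose[OF less.prems sig_permutes[OF j(1,2)]] .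
    obtain xs where xs: "length xs = ninv k (sig j \<circ> f)" "set xs \<subseteq> {1..<k}" "sig j \<circ> f = word xs"
      using less.hyps[OF _ p] e by auto
    have "word (j # xs) = sig j \<circ> (sig j \<circ> f)" using xs(3) by (simp add: word_def)
    also have "\<dots> = f" unfolding comp_assoc[symmetric] sig_sig by simp
    finally show ?thesis using xs e j by (intro exI[of _ "j # xs"]) auto
  qed
qed

lemma perm_length_ninv:
  assumes "f permutes {1..k}"
  shows "perm_length k f = ninv k f"
proof -
  obtain xs where xs: "length xs = ninv k f" "set xs \<subseteq> {1..<k}" "f = word xs"
    using word_exists[OF assms] by blast
  show ?thesis unfolding perm_length_def
  proof (rule Least_equality)
    show "\<exists>xs. length xs = ninv k f \<and> set xs \<subseteq> {1..<k} \<and> f = foldr (\<lambda>i f. sig i \<circ> f) xs id"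
      using xs unfolding word_def by blast
  next
    fix m assume "\<exists>xs. length xs = m \<and> set xs \<subseteq> {1..<k} \<and> f = foldr (\<lambda>i f. sig i \<circ> f) xs id"
    then obtain ys where "length ys = m" "set ys \<subseteq> {1..<k}" "f = word ys" unfolding word_def by blast
    then show "ninv k f \<le> m" using word_props by blast
  qed
qed

lemma sigma_plus_Suc: "sigma_plus r (r + Suc i) = sigma_plus r (r + i) \<circ> sig (r + i)"
  by (subst sigma_plus.simps) simp

lemma sigma_plus_id: "sigma_plus r r = id"
  by (subst sigma_plus.simps) simp

lemma sigma_plus_formula:
  "sigma_plus r (r + i) m = (if m = r + i then r else if r \<le> m \<and> m < r + i then m + 1 else m)"
proof (induction i arbitrary: m)
  case 0 then show ?case by (simp add: sigma_plus_id)
next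
  case (Suc i)
  show ?case unfolding sigma_plus_Suc o_def Suc.IH
    by (auto simp: sig_def Transposition.transpose_def)
qed

definition sp_inv :: "nat \<Rightarrow> nat \<Rightarrow> nat \<Rightarrow> nat" where
  "sp_inv r i m = (if m = r then r + i else if r < m \<and> m \<le> r + i then m - 1 else m)"

lemma sigma_plus_inv: "inv (sigma_plus r (r + i)) = sp_inv r i"
  by (rule inv_equality) (auto simp: sigma_plus_formula sp_inv_def)

lemma sigma_plus_permutes:
  assumes "1 \<le> r" "r + i \<le> k"
  shows "sigma_plus r (r + i) permutes {1..k}"
  using assms
proof (induction i)
  case 0 then show ?case by (simp add: sigma_plus_id permutes_ident)
next
  case (Suc i)
  then show ?case unfolding sigma_plus_Suc
    by (intro permutes_compose[OF sig_permutes]) auto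
qed

lemma ninv_sigma_plus:
  assumes "\<rho> permutes {1..k}" "1 \<le> r" "r + i \<le> k" "ordered_on r (r + i) \<rho>"
  shows "ninv k (sigma_plus r (r + i) \<circ> \<rho>) = ninv k \<rho> + i"
  using assms
proof (induction i arbitrary: \<rho>)
  case 0 then show ?case by (simp add: sigma_plus_id)
next
  case (Suc i)
  define \<rho>' where "\<rho>' = sig (r + i) \<circ> \<rho>"
  have j: "1 \<le> r + i" "r + i < k" using Suc.prems by auto
  have p: "\<rho>' permutes {1..k}" unfolding \<rho>'_def using permutes_compose[OF Suc.prems(1) sig_permutes[OF j]] .
  have lt: "inv \<rho> (r + i) < inv \<rho> (Suc (r + i))" using Suc.prems(4) unfolding ordered_on_def by auto
  have n1: "ninv k \<rho>' = Suc (ninv k \<rho>)" unfolding \<rho>'_def using ninv_sig(1)[OF Suc.prems(1) j lt] .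
  have invr: "inv \<rho>' = inv \<rho> \<circ> sig (r + i)"
    unfolding \<rho>'_def
    by (simp add: o_inv_distrib permutes_bij[OF Suc.prems(1)] permutes_bij[OF sig_permutes[OF j]])
       (simp add: sig_def)
  have ord: "ordered_on r (r + i) \<rho>'"
    unfolding ordered_on_def invr
  proof (intro allI impI)
    fix a b assume ab: "r \<le> a \<and> a < b \<and> b \<le> r + i"
    show "(inv \<rho> \<circ> sig (r + i)) a < (inv \<rho> \<circ> sig (r + i)) b"
    proof (cases "b = r + i")
      case True
      then have "(inv \<rho> \<circ> sig (r + i)) b = inv \<rho> (Suc (r + i))" by (simp add: sig_def)
      moreover have "(inv \<rho> \<circ> sig (r + i)) a = inv \<rho> a" using ab True by (simp add: sig_def Transposition.transpose_def)
      moreover have "inv \<rho> a < inv \<rho> (Suc (r + i))" using Suc.prems(4) ab True unfolding ordered_on_def by auto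
      ultimately show ?thesis by simp
    next
      case False
      then show ?thesis using Suc.prems(4) ab unfolding ordered_on_def
        by (simp add: sig_def Transposition.transpose_def)
    qed
  qed
  have "sigma_plus r (r + Suc i) \<circ> \<rho> = sigma_plus r (r + i) \<circ> \<rho>'"
    unfolding sigma_plus_Suc \<rho>'_def by (simp add: o_assoc)
  then show ?case using Suc.IH[OF p Suc.prems(2) _ ord] Suc.prems(3) n1 by simp
qed

definition Ext :: "nat \<Rightarrow> edge set \<Rightarrow> (edge \<Rightarrow> nat) \<Rightarrow> (edge \<Rightarrow> nat) set" where
  "Ext n E c = {cfg. (\<forall>e. e \<notin> E \<longrightarrow> cfg e = c e) \<and> (\<forall>e\<in>E. cfg e \<le> n)}"

lemma Ext_empty: "Ext n {} c = {c}"
  by (auto simp: Ext_def)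

lemma Ext_insert_set:
  assumes "e \<notin> E"
  shows "Ext n (insert e E) c = (\<Union>m\<in>{..n}. (\<lambda>cfg. cfg(e := m)) ` Ext n E c)"
proof (rule set_eqI)
  fix x
  show "x \<in> Ext n (insert e E) c \<longleftrightarrow> x \<in> (\<Union>m\<in>{..n}. (\<lambda>cfg. cfg(e := m)) ` Ext n E c)"
  proof
    assume x: "x \<in> Ext n (insert e E) c"
    have "x(e := c e) \<in> Ext n E c" using x assms by (auto simp: Ext_def)
    moreover have "x = (x(e := c e))(e := x e)" by simp
    moreover have "x e \<le> n" using x by (auto simp: Ext_def)
    ultimately show "x \<in> (\<Union>m\<in>{..n}. (\<lambda>cfg. cfg(e := m)) ` Ext n E c)" by blast
  next
    assume "x \<in> (\<Union>m\<in>{..n}. (\<lambda>cfg. cfg(e := m)) ` Ext n E c)"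
    then show "x \<in> Ext n (insert e E) c" by (auto simp: Ext_def)
  qed
qed

lemma Ext_finite: "finite E \<Longrightarrow> finite (Ext n E c)"
proof (induction E rule: finite_induct)
  case empty then show ?case by (simp add: Ext_empty)
next
  case (insert e E)
  then show ?case by (simp add: Ext_insert_set)
qed

lemma Ext_upd_inj:
  assumes "e \<notin> E"
  shows "inj_on (\<lambda>cfg. cfg(e := m)) (Ext n E c)"
proof (rule inj_onI)
  fix x y assume x: "x \<in> Ext n E c" and y: "y \<in> Ext n E c" and "x(e := m) = y(e := m)"
  then have "\<forall>e'. e' \<noteq> e \<longrightarrow> x e' = y e'" by (metis fun_upd_other)
  moreover have "x e = y e" using x y assms by (auto simp: Ext_def)
  ultimately show "x = y" by (metis ext)
qed

lemma Ext_insert: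
  assumes "e \<notin> E" "finite E"
  shows "sum f (Ext n (insert e E) c) = (\<Sum>cfg\<in>Ext n E c. \<Sum>m\<le>n. f (cfg(e := m)))"
proof -
  have "sum f (Ext n (insert e E) c) = (\<Sum>m\<le>n. sum f ((\<lambda>cfg. cfg(e := m)) ` Ext n E c))"
    unfolding Ext_insert_set[OF assms(1)]
  proof (rule sum.UNION_disjoint)
    show "finite {..n}" by simp
    show "\<forall>i\<in>{..n}. finite ((\<lambda>cfg. cfg(e := i)) ` Ext n E c)" using Ext_finite[OF assms(2)] by auto
    show "\<forall>i\<in>{..n}. \<forall>j\<in>{..n}. i \<noteq> j \<longrightarrow> (\<lambda>cfg. cfg(e := i)) ` Ext n E c \<inter> (\<lambda>cfg. cfg(e := j)) ` Ext n E c = {}"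
      by (auto simp: fun_upd_def fun_eq_iff) (metis)
  qed
  also have "\<dots> = (\<Sum>m\<le>n. \<Sum>cfg\<in>Ext n E c. f (cfg(e := m)))"
    by (rule sum.cong[OF refl]) (simp add: sum.reindex[OF Ext_upd_inj[OF assms(1)]])
  also have "\<dots> = (\<Sum>cfg\<in>Ext n E c. \<Sum>m\<le>n. f (cfg(e := m)))"
    by (rule sum.swap)
  finally show ?thesis .
qed

definition vw :: "(int \<times> int \<Rightarrow> complex) \<Rightarrow> complex \<Rightarrow> (edge \<Rightarrow> nat) \<Rightarrow> int \<times> int \<Rightarrow> complex" where
  "vw zf Q cfg v = R (zf v) Q (cfg (VE (fst v) (snd v - 1))) (cfg (HE (fst v - 1) (snd v)))
                      (cfg (VE (fst v) (snd v))) (cfg (HE (fst v) (snd v)))"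

definition outs :: "(int \<times> int) set \<Rightarrow> edge set" where
  "outs S = (\<Union>s\<in>S. {VE (fst s) (snd s), HE (fst s) (snd s)})"

lemma outs_finite: "finite S \<Longrightarrow> finite (outs S)"
  by (simp add: outs_def)

lemma stochastic:
  assumes "z \<noteq> Q" "i \<le> n" "j \<le> n"
  shows "(\<Sum>k\<le>n. \<Sum>l\<le>n. R z Q i j k l) = 1"
proof (cases "i = j")
  case True
  have "(\<Sum>k\<le>n. \<Sum>l\<le>n. R z Q i j k l) = (\<Sum>p\<in>{(i,i)}. R z Q i j (fst p) (snd p))"
    by (rule sum2_pts) (use assms True in \<open>auto simp: R_def\<close>)
  then show ?thesis using True by (simp add: R_def)
next
  case False
  have "(\<Sum>k\<le>n. \<Sum>l\<le>n. R z Q i j k l) = (\<Sum>p\<in>{(i,j),(j,i)}. R z Q i j (fst p) (snd p))"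
    by (rule sum2_pts) (use assms False in \<open>auto simp: R_def\<close>)
  also have "\<dots> = R z Q i j i j + R z Q i j j i" using False by simp
  also have "\<dots> = 1"
  proof -
    have zq: "z - Q \<noteq> 0" using assms by simp
    have a: "(z - 1) + (1 - Q) = z - Q" by simp
    have b: "Q * (z - 1) + z * (1 - Q) = z - Q" by (simp add: algebra_simps)
    show ?thesis
    proof (cases "i < j")
      case True
      have "R z Q i j i j = (z - 1) / (z - Q)" "R z Q i j j i = (1 - Q) / (z - Q)" using True by (simp_all add: R_def)
      then have "R z Q i j i j + R z Q i j j i = (z - 1) / (z - Q) + (1 - Q) / (z - Q)" by simp
      also have "\<dots> = ((z - 1) + (1 - Q)) / (z - Q)" by (rule add_divide_distrib[symmetric])
      finally show ?thesis using zq a by simp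
    next
      case False
      have "R z Q i j i j = Q * (z - 1) / (z - Q)" "R z Q i j j i = z * (1 - Q) / (z - Q)"
        using False \<open>i \<noteq> j\<close> by (simp_all add: R_def)
      then have "R z Q i j i j + R z Q i j j i = Q * (z - 1) / (z - Q) + z * (1 - Q) / (z - Q)" by simp
      also have "\<dots> = (Q * (z - 1) + z * (1 - Q)) / (z - Q)" by (rule add_divide_distrib[symmetric])
      finally show ?thesis using zq b by simp
    qed
  qed
  finally show ?thesis .
qed

lemma sum_to_one:
  assumes "finite S" "\<forall>s\<in>S. zf s \<noteq> Q"
    and "\<forall>s\<in>S. \<forall>e\<in>{VE (fst s) (snd s - 1), HE (fst s - 1) (snd s)}. e \<notin> outs S \<longrightarrow> c e \<le> n"
  shows "(\<Sum>cfg\<in>Ext n (outs S) c. \<Prod>s\<in>S. vw zf Q cfg s) = 1"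
  using assms
proof (induction "card S" arbitrary: S)
  case 0
  then have "S = {}" by simp
  then show ?case by (simp add: outs_def Ext_empty)
next
  case (Suc N)
  then have ne: "S \<noteq> {}" by auto
  define M where "M = Max ((\<lambda>s. fst s + snd s) ` S)"
  have "M \<in> (\<lambda>s. fst s + snd s) ` S" unfolding M_def using Suc.prems(1) ne by simp
  then obtain s0 where s0: "s0 \<in> S" "fst s0 + snd s0 = M" by auto
  have mx: "fst s + snd s \<le> fst s0 + snd s0" if "s \<in> S" for s
    unfolding s0(2) M_def using Suc.prems(1) that by simp
  obtain x0 y0 where xy0: "s0 = (x0, y0)" by force
  define S' where "S' = S - {s0}"
  have fS': "finite S'" using Suc.prems(1) unfolding S'_def by simp
  have cS': "N = card S'" using Suc.hyps(2) s0(1) Suc.prems(1) unfolding S'_def by simp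
  have s0S': "s0 \<notin> S'" unfolding S'_def by simp
  have outsS: "outs S = insert (VE x0 y0) (insert (HE x0 y0) (outs S'))"
    unfolding outs_def S'_def using s0(1) xy0 by auto
  have VEn: "VE x0 y0 \<notin> insert (HE x0 y0) (outs S')" using s0S' xy0 unfolding outs_def by auto
  have HEn: "HE x0 y0 \<notin> outs S'" using s0S' xy0 unfolding outs_def by auto
  have inS': "VE x0 y0 \<noteq> VE (fst s) (snd s - 1) \<and> HE x0 y0 \<noteq> HE (fst s - 1) (snd s)
      \<and> VE x0 y0 \<noteq> VE (fst s) (snd s) \<and> HE x0 y0 \<noteq> HE (fst s) (snd s)
      \<and> HE x0 y0 \<noteq> VE (fst s) (snd s - 1) \<and> VE x0 y0 \<noteq> HE (fst s - 1) (snd s)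
      \<and> HE x0 y0 \<noteq> VE (fst s) (snd s) \<and> VE x0 y0 \<noteq> HE (fst s) (snd s)" if "s \<in> S'" for s
  proof -
    have "s \<in> S" "s \<noteq> s0" using that unfolding S'_def by auto
    then have "fst s + snd s \<le> x0 + y0" "s \<noteq> (x0, y0)" using mx xy0 by auto
    then show ?thesis by (cases s) auto
  qed
  have vw_S': "vw zf Q (cfg(HE x0 y0 := m2, VE x0 y0 := m1)) s = vw zf Q cfg s" if "s \<in> S'" for s cfg m1 m2
    using inS'[OF that] unfolding vw_def by (auto simp: fun_upd_def)
  have vw_s0: "vw zf Q (cfg(HE x0 y0 := m2, VE x0 y0 := m1)) s0
      = R (zf s0) Q (cfg (VE x0 (y0 - 1))) (cfg (HE (x0 - 1) y0)) m1 m2" for cfg m1 m2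
    unfolding vw_def xy0 by simp
  have IH: "(\<Sum>cfg\<in>Ext n (outs S') c. \<Prod>s\<in>S'. vw zf Q cfg s) = 1"
  proof (rule Suc.hyps(1)[OF cS' fS'])
    show "\<forall>s\<in>S'. zf s \<noteq> Q" using Suc.prems(2) unfolding S'_def by auto
    show "\<forall>s\<in>S'. \<forall>e\<in>{VE (fst s) (snd s - 1), HE (fst s - 1) (snd s)}. e \<notin> outs S' \<longrightarrow> c e \<le> n"
    proof (intro ballI impI)
      fix s e assume s: "s \<in> S'" and e: "e \<in> {VE (fst s) (snd s - 1), HE (fst s - 1) (snd s)}" and eo: "e \<notin> outs S'"
      have "e \<notin> outs S" unfolding outsS using eo e inS'[OF s] by auto
      then show "c e \<le> n" using Suc.prems(3) s e unfolding S'_def by auto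
    qed
  qed
  have "(\<Sum>cfg\<in>Ext n (outs S) c. \<Prod>s\<in>S. vw zf Q cfg s)
      = (\<Sum>cfg\<in>Ext n (outs S') c. \<Sum>m2\<le>n. \<Sum>m1\<le>n. \<Prod>s\<in>S. vw zf Q (cfg(HE x0 y0 := m2, VE x0 y0 := m1)) s)"
    unfolding outsS
    by (simp add: Ext_insert[OF VEn] Ext_insert[OF HEn] outs_finite[OF fS'])
  also have "\<dots> = (\<Sum>cfg\<in>Ext n (outs S') c. \<Prod>s\<in>S'. vw zf Q cfg s)"
  proof (rule sum.cong[OF refl])
    fix cfg assume cfg: "cfg \<in> Ext n (outs S') c"
    have pr: "(\<Prod>s\<in>S. vw zf Q g s) = vw zf Q g s0 * (\<Prod>s\<in>S'. vw zf Q g s)" for g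
      unfolding S'_def using Suc.prems(1) s0(1) by (simp add: prod.remove)
    have inb: "cfg e \<le> n" if "e \<in> {VE x0 (y0 - 1), HE (x0 - 1) y0}" for e
    proof (cases "e \<in> outs S'")
      case True then show ?thesis using cfg by (auto simp: Ext_def)
    next
      case False
      then have "cfg e = c e" using cfg by (auto simp: Ext_def)
      moreover have "e \<notin> outs S" unfolding outsS using False that by auto
      ultimately show ?thesis using Suc.prems(3) s0(1) xy0 that by auto
    qed
    have "(\<Sum>m2\<le>n. \<Sum>m1\<le>n. \<Prod>s\<in>S. vw zf Q (cfg(HE x0 y0 := m2, VE x0 y0 := m1)) s)
        = (\<Sum>m2\<le>n. \<Sum>m1\<le>n. R (zf s0) Q (cfg (VE x0 (y0 - 1))) (cfg (HE (x0 - 1) y0)) m1 m2 * (\<Prod>s\<in>S'. vw zf Q cfg s))"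
      unfolding pr vw_s0 using vw_S' by (simp cong: prod.cong)
    also have "\<dots> = (\<Sum>m1\<le>n. \<Sum>m2\<le>n. R (zf s0) Q (cfg (VE x0 (y0 - 1))) (cfg (HE (x0 - 1) y0)) m1 m2) * (\<Prod>s\<in>S'. vw zf Q cfg s)"
      by (subst sum.swap) (simp add: sum_distrib_right)
    also have "\<dots> = (\<Prod>s\<in>S'. vw zf Q cfg s)"
      using stochastic[OF _ inb inb] Suc.prems(2) s0(1) by simp
    finally show "(\<Sum>m2\<le>n. \<Sum>m1\<le>n. \<Prod>s\<in>S. vw zf Q (cfg(HE x0 y0 := m2, VE x0 y0 := m1)) s) = (\<Prod>s\<in>S'. vw zf Q cfg s)" .
  qed
  also have "\<dots> = 1" by (rule IH)
  finally show ?case .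
qed

lemma fin_col: "finite {y. (x, y) \<in> set L}"
proof -
  have "{y. (x, y) \<in> set L} \<subseteq> snd ` set L"
  proof
    fix y assume "y \<in> {y. (x, y) \<in> set L}"
    then have "(x, y) \<in> set L" by simp
    then show "y \<in> snd ` set L" by (metis image_eqI snd_conv)
  qed
  then show ?thesis by (rule finite_subset) simp
qed

lemma ulp_step:
  assumes "up_left_path L" "Suc j < length L"
  shows "(fst (L ! Suc j) = fst (L ! j) - 1 \<and> snd (L ! Suc j) = snd (L ! j)) \<or>
         (fst (L ! Suc j) = fst (L ! j) \<and> snd (L ! Suc j) = snd (L ! j) + 1)"
  using assms unfolding up_left_path_def by blast

lemma ulp_mono:
  assumes "up_left_path L" "j \<le> j'" "j' < length L"
  shows "fst (L ! j') \<le> fst (L ! j) \<and> snd (L ! j) \<le> snd (L ! j') \<and>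
         (fst (L ! j) - fst (L ! j')) + (snd (L ! j') - snd (L ! j)) = int (j' - j)"
  using assms(2,3)
proof (induction j' rule: dec_induct)
  case base then show ?case by simp
next
  case (step m)
  have "Suc m < length L" using step by simp
  from ulp_step[OF assms(1) this] step show ?case by auto
qed

lemma ulp_fst_lt:
  assumes "up_left_path L" "j < length L" "j' < length L" "fst (L ! j') < fst (L ! j)"
  shows "j < j'"
proof (rule ccontr)
  assume "\<not> j < j'"
  then have "j' \<le> j" by simp
  then show False using ulp_mono[OF assms(1) _ assms(2)] assms(4) by fastforce
qed

locale colstruct =
  fixes L :: "(int \<times> int) list" and a :: int
  assumes ulp: "up_left_path L" and lo: "fst (last L) < a" and hi: "a \<le> fst (hd L)"
begin

lemma ne: "L \<noteq> []" using ulp unfolding up_left_path_def by simp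

lemma hd0: "hd L = L ! 0" using ne by (simp add: hd_conv_nth)
lemma last0: "last L = L ! (length L - 1)" using ne by (simp add: last_conv_nth)

definition p1 where "p1 = Max {j. j < length L \<and> a \<le> fst (L ! j)}"
definition p0 where "p0 = Min {j. j < length L \<and> fst (L ! j) \<le> a}"

lemma S1: "finite {j. j < length L \<and> a \<le> fst (L ! j)}" "0 \<in> {j. j < length L \<and> a \<le> fst (L ! j)}"
  using hi ne hd0 by auto

lemma S0: "finite {j. j < length L \<and> fst (L ! j) \<le> a}" "length L - 1 \<in> {j. j < length L \<and> fst (L ! j) \<le> a}"
  using lo ne last0 by auto

lemma p1_props: "p1 < length L" "a \<le> fst (L ! p1)" "\<And>j. j < length L \<Longrightarrow> a \<le> fst (L ! j) \<Longrightarrow> j \<le> p1"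
proof -
  have "p1 \<in> {j. j < length L \<and> a \<le> fst (L ! j)}" unfolding p1_def using S1 by (intro Max_in) auto
  then show "p1 < length L" "a \<le> fst (L ! p1)" by auto
  show "\<And>j. j < length L \<Longrightarrow> a \<le> fst (L ! j) \<Longrightarrow> j \<le> p1" unfolding p1_def using S1 by (intro Max_ge) auto
qed

lemma p0_props: "p0 < length L" "fst (L ! p0) \<le> a" "\<And>j. j < length L \<Longrightarrow> fst (L ! j) \<le> a \<Longrightarrow> p0 \<le> j"
proof -
  have "p0 \<in> {j. j < length L \<and> fst (L ! j) \<le> a}" unfolding p0_def using S0 by (intro Min_in) auto
  then show "p0 < length L" "fst (L ! p0) \<le> a" by auto
  show "\<And>j. j < length L \<Longrightarrow> fst (L ! j) \<le> a \<Longrightarrow> p0 \<le> j" unfolding p0_def using S0 by (intro Min_le) auto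
qed

lemma Sp1: "Suc p1 < length L"
proof (rule ccontr)
  assume "\<not> Suc p1 < length L"
  then have "p1 = length L - 1" using p1_props(1) by simp
  then show False using p1_props(2) lo last0 by simp
qed

lemma next_lt: "fst (L ! Suc p1) < a"
proof (rule ccontr)
  assume "\<not> fst (L ! Suc p1) < a"
  then have "Suc p1 \<le> p1" using p1_props(3)[OF Sp1] by simp
  then show False by simp
qed

lemma fst_p1: "fst (L ! p1) = a" and next_pt: "L ! Suc p1 = (a - 1, snd (L ! p1))"
proof -
  have st: "(fst (L ! Suc p1) = fst (L ! p1) - 1 \<and> snd (L ! Suc p1) = snd (L ! p1)) \<or>
         (fst (L ! Suc p1) = fst (L ! p1) \<and> snd (L ! Suc p1) = snd (L ! p1) + 1)"
    using ulp_step[OF ulp Sp1] .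
  then show "fst (L ! p1) = a" using next_lt p1_props(2) by auto
  with st next_lt show "L ! Suc p1 = (a - 1, snd (L ! p1))" by (cases "L ! Suc p1") auto
qed

lemma fst_p0: "fst (L ! p0) = a"
proof (cases "p0 = 0")
  case True then show ?thesis using p0_props(2) hi hd0 by simp
next
  case False
  then have "fst (L ! (p0 - 1)) > a" using p0_props(3)[of "p0 - 1"] p0_props(1) by fastforce
  moreover have "fst (L ! p0) \<ge> fst (L ! (p0 - 1)) - 1"
    using ulp_step[OF ulp, of "p0 - 1"] p0_props(1) False by auto
  ultimately show ?thesis using p0_props(2) by simp
qed

lemma p0_le_p1: "p0 \<le> p1" using p0_props(3)[OF p1_props(1)] fst_p1 by simp

lemma col_iff: "j < length L \<Longrightarrow> fst (L ! j) = a \<longleftrightarrow> p0 \<le> j \<and> j \<le> p1"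
proof
  assume "j < length L" "fst (L ! j) = a"
  then show "p0 \<le> j \<and> j \<le> p1" using p0_props(3) p1_props(3) by auto
next
  assume j: "j < length L" "p0 \<le> j \<and> j \<le> p1"
  then show "fst (L ! j) = a"
    using ulp_mono[OF ulp, of p0 j] ulp_mono[OF ulp, of j p1] p1_props(1) fst_p0 fst_p1 by auto
qed

lemma snd_col: "p0 \<le> j \<Longrightarrow> j \<le> p1 \<Longrightarrow> snd (L ! j) = snd (L ! p0) + int (j - p0)"
  using ulp_mono[OF ulp, of p0 j] p1_props(1) col_iff[of j] fst_p0 by auto

lemma ge_a_le: "j < length L \<Longrightarrow> a \<le> fst (L ! j) \<Longrightarrow> snd (L ! j) \<le> snd (L ! p1)"
  using p1_props(3) ulp_mono[OF ulp, of j p1] p1_props(1) by auto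

lemma col_hi_eq: "col_hi L a = snd (L ! p1)"
proof -
  have fin: "finite {y. (a, y) \<in> set L}" by (rule fin_col)
  have mem: "snd (L ! p1) \<in> {y. (a, y) \<in> set L}"
    using p1_props(1) fst_p1 by (metis (mono_tags, lifting) mem_Collect_eq nth_mem prod.collapse)
  have ub: "y \<le> snd (L ! p1)" if yin: "(a, y) \<in> set L" for y
  proof -
    obtain j where "j < length L" "L ! j = (a, y)" using yin by (auto simp: in_set_conv_nth)
    then show ?thesis using ge_a_le[of j] by auto
  qed
  show ?thesis unfolding col_hi_def using fin mem ub by (intro Max_eqI) auto
qed

lemma col_lo_eq: "col_lo L a = snd (L ! p0)"
proof -
  have fin: "finite {y. (a, y) \<in> set L}" by (rule fin_col)
  have mem: "snd (L ! p0) \<in> {y. (a, y) \<in> set L}"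
    using p0_props(1) fst_p0 by (metis (mono_tags, lifting) mem_Collect_eq nth_mem prod.collapse)
  have lb: "snd (L ! p0) \<le> y" if yin: "(a, y) \<in> set L" for y
  proof -
    obtain j where j: "j < length L" "L ! j = (a, y)" using yin by (auto simp: in_set_conv_nth)
    then have "p0 \<le> j" using p0_props(3)[of j] by auto
    then show ?thesis using ulp_mono[OF ulp, of p0 j] j by auto
  qed
  show ?thesis unfolding col_lo_def using fin mem lb by (intro Min_eqI) auto
qed

lemma col_lo_prev: "col_lo L (a - 1) = snd (L ! p1)"
proof -
  have fin: "finite {y. (a - 1, y) \<in> set L}" by (rule fin_col)
  have mem: "snd (L ! p1) \<in> {y. (a - 1, y) \<in> set L}"
    using Sp1 next_pt by (metis mem_Collect_eq nth_mem)
  have lb: "snd (L ! p1) \<le> y" if yin: "(a - 1, y) \<in> set L" for y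
  proof -
    obtain j where j: "j < length L" "L ! j = (a - 1, y)" using yin by (auto simp: in_set_conv_nth)
    then have "p1 < j" using ulp_fst_lt[OF ulp p1_props(1) j(1)] fst_p1 by simp
    then have "Suc p1 \<le> j" by simp
    then show ?thesis using ulp_mono[OF ulp, of "Suc p1" j] j next_pt by auto
  qed
  show ?thesis unfolding col_lo_def using fin mem lb by (intro Min_eqI) auto
qed

lemma lo_le_hi: "col_lo L a \<le> col_hi L a"
  unfolding col_lo_eq col_hi_eq using ulp_mono[OF ulp p0_le_p1 p1_props(1)] by simp

lemma hi_minus_lo: "col_hi L a - col_lo L a = int (p1 - p0)"
  unfolding col_lo_eq col_hi_eq using snd_col[OF p0_le_p1 order.refl] by simp

lemma step_col:
  assumes "p0 \<le> j" "j < p1"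
  shows "step_edge L j = HE a (col_lo L a + int (j - p0) + 1)"
proof -
  have "fst (L ! Suc j) = a" using col_iff[of "Suc j"] assms p1_props(1) by simp
  moreover have "fst (L ! j) = a" using col_iff[of j] assms p1_props(1) by simp
  ultimately have "snd (L ! Suc j) = snd (L ! j) + 1"
    using ulp_step[OF ulp, of j] assms p1_props(1) by auto
  then show ?thesis unfolding step_edge_def col_lo_eq using snd_col[of j] assms \<open>fst (L ! j) = a\<close> by auto
qed

lemma step_p1: "step_edge L p1 = VE a (col_hi L a)"
  unfolding step_edge_def col_hi_eq using next_pt fst_p1 by simp

end

definition ix :: "int \<Rightarrow> nat \<Rightarrow> nat" where
  "ix c v = (if c < int v then 1 else 0)"

lemma card_filter_sum: "finite A \<Longrightarrow> card {x \<in> A. P x} = (\<Sum>x\<in>A. if P x then 1 else 0)"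
  by (simp add: sum.If_cases Int_def)

lemma card_int_ivl:
  "card {y::int. lo \<le> y \<and> y < m \<and> P y} = (\<Sum>y\<in>{lo..<m}. if P y then 1 else 0)"
proof -
  have "{y::int. lo \<le> y \<and> y < m \<and> P y} = {y \<in> {lo..<m}. P y}" by auto
  then show ?thesis using card_filter_sum[of "{lo..<m}" P] by simp
qed

lemma sum_int_ivl: "(\<Sum>y\<in>{lo..<lo + int N}. f y) = (\<Sum>i<N. f (lo + int i))"
proof (induction N)
  case 0 then show ?case by simp
next
  case (Suc N)
  have "{lo..<lo + int (Suc N)} = insert (lo + int N) {lo..<lo + int N}" by auto
  then show ?case using Suc by (simp add: add.commute)
qed

lemma sum_nat_ivl: "(\<Sum>j\<in>{p..<p + N}. g j) = (\<Sum>i<N. g (p + i))" for p N :: nat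
proof (induction N)
  case 0 then show ?case by simp
next
  case (Suc N)
  have "{p..<p + Suc N} = insert (p + N) {p..<p + N}" by auto
  then show ?case using Suc by (simp add: add.commute)
qed

lemma telescope:
  fixes f k g :: "int \<Rightarrow> nat"
  assumes "\<forall>y'. h < y' \<and> y' \<le> h + int N \<longrightarrow> f y' + g (y' - 1) = k y' + g y'"
  shows "(\<Sum>y\<in>{h..<h + int N}. f (y + 1)) + g h = (\<Sum>y\<in>{h..<h + int N}. k (y + 1)) + g (h + int N)"
  using assms
proof (induction N)
  case 0 then show ?case by simp
next
  case (Suc N)
  have s: "{h..<h + int (Suc N)} = insert (h + int N) {h..<h + int N}" by auto
  have IH: "(\<Sum>y\<in>{h..<h + int N}. f (y + 1)) + g h = (\<Sum>y\<in>{h..<h + int N}. k (y + 1)) + g (h + int N)"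
    using Suc by auto
  have st: "f (h + int N + 1) + g (h + int N) = k (h + int N + 1) + g (h + int N + 1)"
    using Suc.prems[rule_format, of "h + int N + 1"] by simp
  have e: "h + int (Suc N) = h + int N + 1" by simp
  have sf: "(\<Sum>y\<in>{h..<h + int (Suc N)}. f (y + 1)) = f (h + int N + 1) + (\<Sum>y\<in>{h..<h + int N}. f (y + 1))"
    unfolding s by simp
  have sk: "(\<Sum>y\<in>{h..<h + int (Suc N)}. k (y + 1)) = k (h + int N + 1) + (\<Sum>y\<in>{h..<h + int N}. k (y + 1))"
    unfolding s by simp
  have "g (h + int (Suc N)) = g (h + int N + 1)" by (simp only: e)
  then show ?case using IH st sf sk by linarith
qed

lemma height_LL:
  assumes cs: "colstruct Q a"
    and cfgQ: "\<forall>j. Suc j < length Q \<longrightarrow> cfg (step_edge Q j) = bc j"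
    and hb: "col_hi Q a < b"
    and cons: "\<forall>y. col_hi Q a < y \<and> y < b \<longrightarrow>
        ix c (cfg (HE (a - 1) y)) + ix c (cfg (VE a (y - 1))) = ix c (cfg (HE a y)) + ix c (cfg (VE a y))"
  shows "height Q bc cfg (a - 1, b - 1) c = height Q bc cfg (a, b - 1) c + ix c (cfg (VE a (b - 1)))"
proof -
  interpret colstruct Q a by (rule cs)
  define lo where "lo = col_lo Q a"
  define hi where "hi = col_hi Q a"
  define N where "N = p1 - p0"
  have hilo: "hi = lo + int N" unfolding hi_def lo_def N_def using hi_minus_lo by simp
  define M where "M = nat (b - 1 - hi)"
  have bM: "b - 1 = hi + int M" unfolding M_def using hb hi_def by simp
  define A0 where "A0 = {j. Suc j < length Q \<and> a < fst (Q ! j) \<and> c < int (bc j)}"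
  define C where "C = {j. p0 \<le> j \<and> j \<le> p1 \<and> c < int (bc j)}"
  have A1: "{j. Suc j < length Q \<and> a - 1 < fst (Q ! j) \<and> c < int (bc j)} = A0 \<union> C"
  proof (rule set_eqI)
    fix j
    show "j \<in> {j. Suc j < length Q \<and> a - 1 < fst (Q ! j) \<and> c < int (bc j)} \<longleftrightarrow> j \<in> A0 \<union> C"
    proof
      assume "j \<in> {j. Suc j < length Q \<and> a - 1 < fst (Q ! j) \<and> c < int (bc j)}"
      then show "j \<in> A0 \<union> C" unfolding A0_def C_def using col_iff[of j] by auto
    next
      assume "j \<in> A0 \<union> C"
      then show "j \<in> {j. Suc j < length Q \<and> a - 1 < fst (Q ! j) \<and> c < int (bc j)}"
        unfolding A0_def C_def using col_iff[of j] Sp1 by auto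
    qed
  qed
  have fa: "fst (Q ! j) = a" if "p0 \<le> j" "j \<le> p1" for j using col_iff[of j] that p1_props(1) by auto
  have disj: "A0 \<inter> C = {}" unfolding A0_def C_def using fa by force
  have finA0: "finite A0" unfolding A0_def by (rule finite_subset[of _ "{..<length Q}"]) auto
  have finC: "finite C" unfolding C_def by (rule finite_subset[of _ "{..p1}"]) auto
  have cardC: "card C = (\<Sum>y\<in>{lo..<hi}. ix c (cfg (HE a (y + 1)))) + ix c (cfg (VE a hi))"
  proof -
    have "C = {j \<in> {p0..p1}. c < int (bc j)}" unfolding C_def by auto
    then have "card C = (\<Sum>j\<in>{p0..p1}. ix c (bc j))"
      using card_filter_sum[of "{p0..p1}" "\<lambda>j. c < int (bc j)"] by (simp add: ix_def)
    also have "{p0..p1} = insert p1 {p0..<p0 + N}" unfolding N_def using p0_le_p1 by auto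
    also have "(\<Sum>j\<in>insert p1 {p0..<p0 + N}. ix c (bc j)) = ix c (bc p1) + (\<Sum>j\<in>{p0..<p0 + N}. ix c (bc j))"
      by (subst sum.insert) (auto simp: N_def)
    also have "bc p1 = cfg (VE a hi)" using cfgQ Sp1 step_p1 hi_def by metis
    also have "(\<Sum>j\<in>{p0..<p0 + N}. ix c (bc j)) = (\<Sum>i<N. ix c (bc (p0 + i)))" by (rule sum_nat_ivl)
    also have "\<dots> = (\<Sum>i<N. ix c (cfg (HE a (lo + int i + 1))))"
    proof (rule sum.cong[OF refl])
      fix i assume "i \<in> {..<N}"
      then have i: "p0 \<le> p0 + i" "p0 + i < p1" unfolding N_def by auto
      then have "bc (p0 + i) = cfg (step_edge Q (p0 + i))" using cfgQ Sp1 by simp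
      also have "\<dots> = cfg (HE a (lo + int i + 1))" using step_col[OF i] lo_def by simp
      finally show "ix c (bc (p0 + i)) = ix c (cfg (HE a (lo + int i + 1)))" by simp
    qed
    also have "\<dots> = (\<Sum>y\<in>{lo..<hi}. ix c (cfg (HE a (y + 1))))"
      unfolding hilo by (rule sum_int_ivl[symmetric])
    finally show ?thesis by simp
  qed
  have h1: "height Q bc cfg (a - 1, b - 1) c = card A0 + card C + (\<Sum>y\<in>{hi..<b - 1}. ix c (cfg (HE (a - 1) (y + 1))))"
    unfolding height_def fst_conv snd_conv A1 card_int_ivl col_lo_prev
    using card_Un_disjoint[OF finA0 finC disj] col_hi_eq hi_def by (simp add: ix_def)
  have h0: "height Q bc cfg (a, b - 1) c = card A0 + (\<Sum>y\<in>{lo..<b - 1}. ix c (cfg (HE a (y + 1))))"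
    unfolding height_def fst_conv snd_conv card_int_ivl A0_def lo_def by (simp add: ix_def)
  have split: "(\<Sum>y\<in>{lo..<b - 1}. ix c (cfg (HE a (y + 1)))) = (\<Sum>y\<in>{lo..<hi}. ix c (cfg (HE a (y + 1)))) + (\<Sum>y\<in>{hi..<b - 1}. ix c (cfg (HE a (y + 1))))"
  proof -
    have "{lo..<b - 1} = {lo..<hi} \<union> {hi..<b - 1}" using hilo bM by auto
    then show ?thesis by (simp add: sum.union_disjoint ivl_disj_int)
  qed
  have tel: "(\<Sum>y\<in>{hi..<hi + int M}. ix c (cfg (HE (a - 1) (y + 1)))) + ix c (cfg (VE a hi))
     = (\<Sum>y\<in>{hi..<hi + int M}. ix c (cfg (HE a (y + 1)))) + ix c (cfg (VE a (hi + int M)))"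
    by (rule telescope[where f = "\<lambda>y. ix c (cfg (HE (a - 1) y))" and k = "\<lambda>y. ix c (cfg (HE a y))"
          and g = "\<lambda>y. ix c (cfg (VE a y))"]) (use cons bM hi_def in auto)
  show ?thesis unfolding h1 h0 split cardC using tel bM by simp
qed

lemma Ext_upd_image:
  assumes "e \<notin> E"
  shows "(\<lambda>cfg. cfg(e := m)) ` Ext n E c = Ext n E (c(e := m))"
proof (rule set_eqI)
  fix x
  show "x \<in> (\<lambda>cfg. cfg(e := m)) ` Ext n E c \<longleftrightarrow> x \<in> Ext n E (c(e := m))"
  proof
    assume "x \<in> (\<lambda>cfg. cfg(e := m)) ` Ext n E c"
    then show "x \<in> Ext n E (c(e := m))" using assms by (auto simp: Ext_def)
  next
    assume x: "x \<in> Ext n E (c(e := m))"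
    have "x(e := c e) \<in> Ext n E c" using x assms by (auto simp: Ext_def)
    moreover have "x = (x(e := c e))(e := m)" using x assms by (auto simp: Ext_def fun_eq_iff)
    ultimately show "x \<in> (\<lambda>cfg. cfg(e := m)) ` Ext n E c" by blast
  qed
qed

lemma Ext_insert2:
  assumes "e \<notin> E" "finite E"
  shows "sum f (Ext n (insert e E) c) = (\<Sum>m\<le>n. sum f (Ext n E (c(e := m))))"
proof -
  have "sum f (Ext n (insert e E) c) = (\<Sum>m\<le>n. sum f ((\<lambda>cfg. cfg(e := m)) ` Ext n E c))"
    unfolding Ext_insert_set[OF assms(1)]
  proof (rule sum.UNION_disjoint)
    show "finite {..n}" by simp
    show "\<forall>i\<in>{..n}. finite ((\<lambda>cfg. cfg(e := i)) ` Ext n E c)" using Ext_finite[OF assms(2)] by auto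
    show "\<forall>i\<in>{..n}. \<forall>j\<in>{..n}. i \<noteq> j \<longrightarrow> (\<lambda>cfg. cfg(e := i)) ` Ext n E c \<inter> (\<lambda>cfg. cfg(e := j)) ` Ext n E c = {}"
      by (auto simp: fun_upd_def fun_eq_iff) (metis)
  qed
  then show ?thesis by (simp add: Ext_upd_image[OF assms(1)])
qed

lemma R_nonzero: "R z Q i j k l \<noteq> 0 \<Longrightarrow> (k = i \<and> l = j) \<or> (k = j \<and> l = i)"
  unfolding R_def by (auto split: if_splits)

lemma R_cons: "R z Q i j k l \<noteq> 0 \<Longrightarrow> ix e j + ix e i = ix e l + ix e k"
  using R_nonzero[of z Q i j k l] by auto

lemma height_cong:
  assumes "\<forall>y. col_lo Q (fst p) \<le> y \<and> y < snd p \<longrightarrow> cfg (HE (fst p) (y + 1)) = cfg' (HE (fst p) (y + 1))"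
  shows "height Q bc cfg p e = height Q bc cfg' p e"
proof -
  have "{y. col_lo Q (fst p) \<le> y \<and> y < snd p \<and> e < int (cfg (HE (fst p) (y + 1)))}
      = {y. col_lo Q (fst p) \<le> y \<and> y < snd p \<and> e < int (cfg' (HE (fst p) (y + 1)))}"
    using assms by auto
  then show ?thesis unfolding height_def by simp
qed

lemma height_up:
  assumes "col_lo Q x \<le> y"
  shows "height Q bc cfg (x, y + 1) e = height Q bc cfg (x, y) e + ix e (cfg (HE x (y + 1)))"
proof -
  have s: "{col_lo Q x..<y + 1} = insert y {col_lo Q x..<y}" using assms by auto
  show ?thesis unfolding height_def fst_conv snd_conv card_int_ivl s
    by (simp add: ix_def)
qed

lemma sigma_plus_permutes_gen:
  assumes "\<forall>m. r \<le> m \<and> m \<le> r + i \<longrightarrow> m \<in> S"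
  shows "sigma_plus r (r + i) permutes S"
  using assms
proof (induction i)
  case 0 then show ?case by (simp add: sigma_plus_id permutes_ident)
next
  case (Suc i)
  have "sig (r + i) permutes S" unfolding sig_def using Suc.prems by (intro permutes_swap_id) auto
  then show ?case unfolding sigma_plus_Suc using Suc by (intro permutes_compose) auto
qed

lemma region_finite: "finite (region_vertices P Q)"
proof -
  have "region_vertices P Q \<subseteq> (\<Union>x\<in>{fst (last Q)<..fst (hd Q)}. {x} \<times> {col_hi Q x<..col_hi P x})"
    unfolding region_vertices_def by auto
  then show ?thesis by (rule finite_subset) auto
qed

lemma model_edges_finite: "finite (model_edges P Q)"
proof -
  have "{step_edge Q j | j. Suc j < length Q} = (step_edge Q) ` {j. Suc j < length Q}" by auto
  moreover have "finite {j. Suc j < length Q}" by (rule finite_subset[of _ "{..<length Q}"]) auto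
  ultimately have "finite {step_edge Q j | j. Suc j < length Q}" by simp
  then show ?thesis unfolding model_edges_def using region_finite by (simp add: vertex_edges_def)
qed

lemma configs_finite: "finite (configs n P Q bc)"
proof -
  have "configs n P Q bc \<subseteq> Ext n (model_edges P Q) (\<lambda>_. 0)"
    unfolding configs_def Ext_def by auto
  then show ?thesis using Ext_finite[OF model_edges_finite] by (rule finite_subset)
qed

locale S53 =
  fixes n :: nat and q :: real and u w :: "int \<Rightarrow> complex"
    and P Q :: "(int \<times> int) list" and bc :: "nat \<Rightarrow> nat"
    and k r t :: nat and A B c :: "nat \<Rightarrow> int" and \<pi> :: "nat \<Rightarrow> nat" and z :: complex
  assumes q: "0 < q" "q < 1"
    and dom: "skew_domain P Q"
    and bc_le: "\<forall>j. Suc j < length Q \<longrightarrow> bc j \<le> n"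
    and rap: "\<forall>v\<in>region_vertices P Q. w (fst v) \<noteq> 0 \<and> u (snd v) / w (fst v) \<noteq> complex_of_real q"
    and rt: "1 \<le> r" "1 \<le> t" "r + t - 1 \<le> k"
    and A_mono: "\<forall>i j. 1 \<le> i \<and> i \<le> j \<and> j \<le> k \<longrightarrow> A i \<le> A j"
    and A_eq: "\<forall>i. r \<le> i \<and> i \<le> r + t - 1 \<longrightarrow> A i = A r"
    and A_lt1: "1 < r \<longrightarrow> A (r - 1) < A r"
    and B_mono: "\<forall>i j. 1 \<le> i \<and> i \<le> j \<and> j \<le> k \<longrightarrow> B j \<le> B i"
    and B_eq: "\<forall>i. r \<le> i \<and> i \<le> r + t - 1 \<longrightarrow> B i = B r"
    and B_lt2: "r + t \<le> k \<longrightarrow> B (r + t) < B (r + t - 1)"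
    and c_mono: "\<forall>i j. 1 \<le> i \<and> i \<le> j \<and> j \<le> k \<longrightarrow> c i \<le> c j"
    and v: "(A r, B r) \<in> region_vertices P Q"
    and z: "z = u (B r) / w (A r)"
    and perm: "\<pi> permutes {1..k}"
    and ord: "ordered_on r (r + t - 1) \<pi>"
begin

abbreviation "Qc \<equiv> complex_of_real q"

definition "a = A r"
definition "b = B r"
definition zf :: "int \<times> int \<Rightarrow> complex" where "zf v = u (snd v) / w (fst v)"
definition "d = perm_act \<pi> c"
definition "td i = d (r + i)"
definition "J = {r..<r + t}"
definition "Oset = {1..k} - J"
definition "D = {v \<in> region_vertices P Q. a \<le> fst v \<and> b \<le> snd v}"
definition "D' = D - {(a, b)}"
definition "T = outs D"
definition "RO = region_vertices P Q - D"
definition "Wout cfg = (\<Prod>s\<in>RO. vw zf Qc cfg s)"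
definition "X cfg = (\<Sum>m\<in>Oset. height Q bc cfg (A m, B m) (d m))"
definition "S cfg = (\<Sum>m\<in>J. height Q bc cfg (a, b - 1) (d m))"
definition "K cfg = Qc ^ perm_length k \<pi> * Qc ^ (X cfg + S cfg)"

lemma ulp: "up_left_path Q" using dom unfolding skew_domain_def by simp

lemma vreg: "fst (last Q) < a" "a \<le> fst (hd Q)" "col_hi Q a < b" "b \<le> col_hi P a"
  using v unfolding region_vertices_def a_def b_def by auto

lemma cs: "colstruct Q a" by (unfold_locales) (use ulp vreg in auto)

lemma zq: "z \<noteq> Qc"
proof -
  have "u (snd (A r, B r)) / w (fst (A r, B r)) \<noteq> Qc" using rap v by blast
  then show ?thesis by (simp add: z)
qed
lemma Q1: "Qc \<noteq> 1" using q by simp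

lemma J_sub: "J \<subseteq> {1..k}" unfolding J_def using rt by auto

lemma inJ: "m \<in> J \<Longrightarrow> A m = a \<and> B m = b"
proof -
  assume "m \<in> J"
  then have "r \<le> m \<and> m \<le> r + t - 1" unfolding J_def by auto
  then show ?thesis using A_eq[rule_format, of m] B_eq[rule_format, of m] unfolding a_def b_def by simp
qed

lemma inO: "m \<in> Oset \<Longrightarrow> (A m < a \<or> B m < b) \<and> (m < r \<or> r + t \<le> m) \<and> 1 \<le> m \<and> m \<le> k"
proof -
  assume m: "m \<in> Oset"
  then have m1: "1 \<le> m" "m \<le> k" "m < r \<or> r + t \<le> m" unfolding Oset_def J_def by auto
  show ?thesis
  proof (cases "m < r")
    case True
    have h: "1 \<le> m \<and> m \<le> r - 1 \<and> r - 1 \<le> k" using True m1 rt by auto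
    have "A m \<le> A (r - 1)" using A_mono h by blast
    moreover have "A (r - 1) < A r" using A_lt1 True m1 by auto
    ultimately show ?thesis using m1 a_def by auto
  next
    case False
    then have "r + t \<le> m" using m1 by auto
    then have h: "1 \<le> r + t \<and> r + t \<le> m \<and> m \<le> k" using m1 rt by auto
    have "B m \<le> B (r + t)" using B_mono h by blast
    moreover have "B (r + t) < B (r + t - 1)" using B_lt2 \<open>r + t \<le> m\<close> m1 by auto
    moreover have "B (r + t - 1) = B r" using B_eq[rule_format, of "r + t - 1"] rt by simp
    ultimately show ?thesis using m1 b_def by auto
  qed
qed

lemma td_sorted: "\<forall>i j. i \<le> j \<and> j < t \<longrightarrow> td i \<le> td j"
proof (intro allI impI)
  fix i j assume ij: "i \<le> j \<and> j < t"
  show "td i \<le> td j"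
  proof (cases "i = j")
    case True then show ?thesis by simp
  next
    case False
    then have lt: "inv \<pi> (r + i) < inv \<pi> (r + j)" using ord ij unfolding ordered_on_def by auto
    have "r + i \<in> {1..k}" "r + j \<in> {1..k}" using ij rt by auto
    then have i1: "inv \<pi> (r + i) \<in> {1..k}" and i2: "inv \<pi> (r + j) \<in> {1..k}"
      using permutes_in_image[OF permutes_inv[OF perm]] by blast+
    have "c (inv \<pi> (r + i)) \<le> c (inv \<pi> (r + j))"
      using c_mono[rule_format, of "inv \<pi> (r + i)" "inv \<pi> (r + j)"] i1 i2 lt by simp
    then show ?thesis unfolding td_def d_def perm_act_def by simp
  qed
qed

lemma inT: "e \<in> T \<longleftrightarrow> (\<exists>s\<in>D. e = VE (fst s) (snd s) \<or> e = HE (fst s) (snd s))"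
  unfolding T_def outs_def by auto

lemma HE_T: "HE x y \<in> T \<Longrightarrow> a \<le> x \<and> b \<le> y" unfolding inT D_def by auto
lemma VE_T: "VE x y \<in> T \<Longrightarrow> a \<le> x \<and> b \<le> y" unfolding inT D_def by auto

lemma T_model: "T \<subseteq> model_edges P Q"
  unfolding T_def outs_def model_edges_def D_def vertex_edges_def by auto

lemma T_step: "Suc j < length Q \<Longrightarrow> step_edge Q j \<notin> T"
proof
  assume j: "Suc j < length Q" and inTT: "step_edge Q j \<in> T"
  interpret colstruct Q a by (rule cs)
  have hi: "col_hi Q a < b" using vreg by simp
  show False
  proof (cases "snd (Q ! Suc j) = snd (Q ! j)")
    case True
    then have "step_edge Q j = VE (fst (Q ! j)) (snd (Q ! j))" unfolding step_edge_def by simp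
    then have "a \<le> fst (Q ! j)" "b \<le> snd (Q ! j)" using VE_T inTT by auto
    then show False using ge_a_le[of j] j col_hi_eq hi by auto
  next
    case False
    then have e: "step_edge Q j = HE (fst (Q ! j)) (snd (Q ! j) + 1)" unfolding step_edge_def by simp
    have st: "fst (Q ! Suc j) = fst (Q ! j) \<and> snd (Q ! Suc j) = snd (Q ! j) + 1"
      using ulp_step[OF ulp j] False by auto
    have "a \<le> fst (Q ! j)" "b \<le> snd (Q ! j) + 1" using HE_T inTT e by auto
    then show False using ge_a_le[of "Suc j"] j col_hi_eq hi st by auto
  qed
qed

lemma RO_edges:
  assumes "s \<in> RO"
  shows "VE (fst s) (snd s - 1) \<notin> T" "HE (fst s - 1) (snd s) \<notin> T" "VE (fst s) (snd s) \<notin> T" "HE (fst s) (snd s) \<notin> T"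
proof -
  have s: "s \<in> region_vertices P Q" "\<not> (a \<le> fst s \<and> b \<le> snd s)" using assms unfolding RO_def D_def by auto
  show "VE (fst s) (snd s - 1) \<notin> T" using VE_T s by force
  show "HE (fst s - 1) (snd s) \<notin> T" using HE_T s by force
  show "VE (fst s) (snd s) \<notin> T" using VE_T s by force
  show "HE (fst s) (snd s) \<notin> T" using HE_T s by force
qed

definition agree :: "(edge \<Rightarrow> nat) \<Rightarrow> (edge \<Rightarrow> nat) \<Rightarrow> bool" where
  "agree cfg cfg' \<longleftrightarrow> (\<forall>e. e \<notin> T \<longrightarrow> cfg e = cfg' e)"

lemma Wout_cong: "agree cfg cfg' \<Longrightarrow> Wout cfg = Wout cfg'"
  unfolding Wout_def agree_def
  by (rule prod.cong[OF refl]) (use RO_edges in \<open>simp add: vw_def\<close>)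

lemma height_cong_T:
  assumes "agree cfg cfg'" "x < a \<or> y < b"
  shows "height Q bc cfg (x, y) e = height Q bc cfg' (x, y) e"
proof (rule height_cong, intro allI impI)
  fix y' assume "col_lo Q (fst (x, y)) \<le> y' \<and> y' < snd (x, y)"
  then have "HE x (y' + 1) \<notin> T" using HE_T assms(2) by force
  then show "cfg (HE (fst (x, y)) (y' + 1)) = cfg' (HE (fst (x, y)) (y' + 1))"
    using assms(1) by (simp add: agree_def)
qed

lemma X_cong: "agree cfg cfg' \<Longrightarrow> X cfg = X cfg'"
proof -
  assume ag: "agree cfg cfg'"
  show ?thesis unfolding X_def
  proof (rule sum.cong[OF refl])
    fix m assume "m \<in> Oset"
    then have "A m < a \<or> B m < b" using inO by blast
    then show "height Q bc cfg (A m, B m) (d m) = height Q bc cfg' (A m, B m) (d m)"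
      by (rule height_cong_T[OF ag])
  qed
qed

lemma S_cong: "agree cfg cfg' \<Longrightarrow> S cfg = S cfg'"
  unfolding S_def by (rule sum.cong[OF refl]) (rule height_cong_T, auto)

lemma K_cong: "agree cfg cfg' \<Longrightarrow> K cfg = K cfg'"
  unfolding K_def using X_cong S_cong by simp

end

context S53 begin

lemma ab_D: "(a, b) \<in> D" unfolding D_def using v a_def b_def by simp
lemma D_sub: "D \<subseteq> region_vertices P Q" unfolding D_def by auto
lemma D_ins: "D = insert (a, b) D'" unfolding D'_def using ab_D by auto
lemma ab_nD': "(a, b) \<notin> D'" unfolding D'_def by simp
lemma D'_fin: "finite D'" unfolding D'_def using finite_subset[OF D_sub region_finite] by simp
lemma D'_sub: "D' \<subseteq> region_vertices P Q" unfolding D'_def using D_sub by auto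

lemma weight_vw: "cfg_weight q u w P Q cfg = (\<Prod>s\<in>region_vertices P Q. vw zf Qc cfg s)"
  unfolding cfg_weight_def vw_def zf_def by simp

lemma weight_split:
  "cfg_weight q u w P Q cfg = Wout cfg * (vw zf Qc cfg (a, b) * (\<Prod>s\<in>D'. vw zf Qc cfg s))"
proof -
  have reg: "region_vertices P Q = RO \<union> D" unfolding RO_def using D_sub by auto
  have fin: "finite RO" "finite D" unfolding RO_def using region_finite finite_subset[OF D_sub region_finite] by auto
  have "cfg_weight q u w P Q cfg = (\<Prod>s\<in>RO. vw zf Qc cfg s) * (\<Prod>s\<in>D. vw zf Qc cfg s)"
    unfolding weight_vw reg by (rule prod.union_disjoint) (use fin in \<open>auto simp: RO_def\<close>)
  also have "(\<Prod>s\<in>D. vw zf Qc cfg s) = vw zf Qc cfg (a, b) * (\<Prod>s\<in>D'. vw zf Qc cfg s)"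
    unfolding D_ins using D'_fin ab_nD' by simp
  finally show ?thesis unfolding Wout_def .
qed

lemma conservation:
  assumes "cfg_weight q u w P Q cfg \<noteq> 0"
  shows "\<forall>y. col_hi Q a < y \<and> y < b \<longrightarrow>
        ix e (cfg (HE (a - 1) y)) + ix e (cfg (VE a (y - 1))) = ix e (cfg (HE a y)) + ix e (cfg (VE a y))"
proof (intro allI impI)
  fix y assume y: "col_hi Q a < y \<and> y < b"
  have "(a, y) \<in> region_vertices P Q" unfolding region_vertices_def using vreg y by auto
  then have "vw zf Qc cfg (a, y) \<noteq> 0" using assms unfolding weight_vw using region_finite by auto
  then have "R (zf (a, y)) Qc (cfg (VE a (y - 1))) (cfg (HE (a - 1) y)) (cfg (VE a y)) (cfg (HE a y)) \<noteq> 0"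
    unfolding vw_def by simp
  from R_cons[OF this, of e] show "ix e (cfg (HE (a - 1) y)) + ix e (cfg (VE a (y - 1))) = ix e (cfg (HE a y)) + ix e (cfg (VE a y))" .
qed

lemma cfgQ: "cfg \<in> configs n P Q bc \<Longrightarrow> \<forall>j. Suc j < length Q \<longrightarrow> cfg (step_edge Q j) = bc j"
  unfolding configs_def by auto

lemma hLL:
  assumes "cfg \<in> configs n P Q bc" "cfg_weight q u w P Q cfg \<noteq> 0"
  shows "height Q bc cfg (a - 1, b - 1) e = height Q bc cfg (a, b - 1) e + ix e (cfg (VE a (b - 1)))"
  by (rule height_LL[OF cs cfgQ[OF assms(1)] vreg(3) conservation[OF assms(2)]])

lemma lo_a: "col_lo Q a \<le> b - 1"
proof -
  interpret colstruct Q a by (rule cs)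
  show ?thesis using lo_le_hi vreg(3) by simp
qed

lemma lo_a1: "col_lo Q (a - 1) \<le> b - 1"
proof -
  interpret colstruct Q a by (rule cs)
  show ?thesis using col_lo_prev col_hi_eq vreg(3) by simp
qed

lemma hUR: "height Q bc cfg (a, b) e = height Q bc cfg (a, b - 1) e + ix e (cfg (HE a b))"
  using height_up[OF lo_a, of bc cfg e] by simp

lemma hUL: "height Q bc cfg (a - 1, b) e = height Q bc cfg (a - 1, b - 1) e + ix e (cfg (HE (a - 1) b))"
  using height_up[OF lo_a1, of bc cfg e] by simp

lemma HH_split: "(\<Sum>m = 1..k. f m) = (\<Sum>m\<in>Oset. f m) + (\<Sum>m\<in>J. f m)"
  unfolding Oset_def using sum.subset_diff[OF J_sub, of f] by simp

lemma J_sum: "(\<Sum>m\<in>J. f m) = (\<Sum>i<t. f (r + i))"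
  unfolding J_def by (rule sum_nat_ivl)

lemma Nf_eq: "(\<Sum>m\<in>J. ix (d m) l) = Nf t td (int l)"
proof -
  have "(\<Sum>m\<in>J. ix (d m) l) = (\<Sum>i<t. ix (td i) l)" unfolding J_sum td_def ..
  also have "\<dots> = card {i \<in> {..<t}. td i < int l}"
    using card_filter_sum[of "{..<t}" "\<lambda>i. td i < int l"] by (simp add: ix_def)
  also have "{i \<in> {..<t}. td i < int l} = {i. i < t \<and> td i < int l}" by auto
  finally show ?thesis unfolding Nf_def .
qed

lemma ebox0: "m \<in> Oset \<Longrightarrow> ebox r (r + t - 1) m = 0 \<and> ebox r r m = 0 \<and> ebox (r + 1) (r + t - 1) m = 0"
  using inO[of m] rt unfolding ebox_def by auto

lemma ebox1: "m \<in> J \<Longrightarrow> ebox r (r + t - 1) m = 1 \<and> ebox r r m = (if m = r then 1 else 0)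
    \<and> ebox (r + 1) (r + t - 1) m = (if m = r then 0 else 1)"
  unfolding J_def ebox_def using rt by auto

lemma HH0: "HH Q bc cfg k A B d = X cfg + S cfg + Nf t td (int (cfg (HE a b)))"
proof -
  have "(\<Sum>m\<in>J. height Q bc cfg (A m, B m) (d m)) = (\<Sum>m\<in>J. height Q bc cfg (a, b - 1) (d m) + ix (d m) (cfg (HE a b)))"
    by (rule sum.cong[OF refl]) (simp add: inJ hUR)
  also have "\<dots> = S cfg + Nf t td (int (cfg (HE a b)))" unfolding S_def Nf_eq[symmetric] by (simp add: sum.distrib)
  finally show ?thesis unfolding HH_def HH_split X_def by simp
qed

lemma HH1: "HH Q bc cfg k A (\<lambda>i. B i - ebox r (r + t - 1) i) d = X cfg + S cfg"
proof -
  have o: "(\<Sum>m\<in>Oset. height Q bc cfg (A m, B m - ebox r (r + t - 1) m) (d m)) = X cfg"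
    unfolding X_def by (rule sum.cong[OF refl]) (frule ebox0, simp)
  have j: "(\<Sum>m\<in>J. height Q bc cfg (A m, B m - ebox r (r + t - 1) m) (d m)) = S cfg"
    unfolding S_def by (rule sum.cong[OF refl]) (frule ebox1, frule inJ, simp)
  show ?thesis unfolding HH_def HH_split o j ..
qed

lemma pa_sigma:
  assumes "i < t"
  shows "perm_act (sigma_plus r (r + i) \<circ> \<pi>) c = (\<lambda>m. d (sp_inv r i m))"
proof -
  have p1: "sigma_plus r (r + i) permutes {1..k}" using sigma_plus_permutes[of r i k] rt assms by auto
  have "inv (sigma_plus r (r + i) \<circ> \<pi>) = inv \<pi> \<circ> inv (sigma_plus r (r + i))"
    by (rule o_inv_distrib[OF permutes_bij[OF p1] permutes_bij[OF perm]])
  then show ?thesis unfolding perm_act_def d_def sigma_plus_inv by (simp add: fun_eq_iff)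
qed

lemma spinv_O: "m \<in> Oset \<Longrightarrow> i < t \<Longrightarrow> sp_inv r i m = m"
  using inO[of m] unfolding sp_inv_def by auto

lemma spinv_bij: "i < t \<Longrightarrow> bij_betw (sp_inv r i) J J"
proof -
  assume i: "i < t"
  have "sigma_plus r (r + i) permutes J"
    by (rule sigma_plus_permutes_gen) (use i in \<open>auto simp: J_def\<close>)
  then have "inv (sigma_plus r (r + i)) permutes J" by (rule permutes_inv)
  then show ?thesis unfolding sigma_plus_inv by (rule permutes_imp_bij)
qed

lemma spinv_r: "sp_inv r i r = r + i" unfolding sp_inv_def by simp

lemma r_J: "r \<in> J" unfolding J_def using rt by auto

lemma S_reindex: "i < t \<Longrightarrow> (\<Sum>m\<in>J. height Q bc cfg (a, b - 1) (d (sp_inv r i m))) = S cfg"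
  unfolding S_def by (rule sum.reindex_bij_betw[OF spinv_bij])

lemma HH2:
  assumes cfg: "cfg \<in> configs n P Q bc" "cfg_weight q u w P Q cfg \<noteq> 0" and i: "i < t"
  shows "HH Q bc cfg k (\<lambda>j. A j - ebox r r j) (\<lambda>j. B j - ebox r (r + t - 1) j)
      (perm_act (sigma_plus r (r + i) \<circ> \<pi>) c) = X cfg + S cfg + ix (td i) (cfg (VE a (b - 1)))"
proof -
  have o: "(\<Sum>m\<in>Oset. height Q bc cfg (A m - ebox r r m, B m - ebox r (r + t - 1) m) (d (sp_inv r i m))) = X cfg"
    unfolding X_def by (rule sum.cong[OF refl]) (frule ebox0, simp add: spinv_O i)
  have "(\<Sum>m\<in>J. height Q bc cfg (A m - ebox r r m, B m - ebox r (r + t - 1) m) (d (sp_inv r i m)))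
      = (\<Sum>m\<in>J. height Q bc cfg (a, b - 1) (d (sp_inv r i m)) + (if m = r then ix (d (sp_inv r i m)) (cfg (VE a (b - 1))) else 0))"
  proof (rule sum.cong[OF refl])
    fix m assume m: "m \<in> J"
    show "height Q bc cfg (A m - ebox r r m, B m - ebox r (r + t - 1) m) (d (sp_inv r i m))
      = height Q bc cfg (a, b - 1) (d (sp_inv r i m)) + (if m = r then ix (d (sp_inv r i m)) (cfg (VE a (b - 1))) else 0)"
      using ebox1[OF m] inJ[OF m] hLL[OF cfg] by (cases "m = r") auto
  qed
  also have "\<dots> = S cfg + ix (td i) (cfg (VE a (b - 1)))"
    using S_reindex[OF i] r_J by (simp add: sum.distrib spinv_r td_def J_def)
  finally have j: "(\<Sum>m\<in>J. height Q bc cfg (A m - ebox r r m, B m - ebox r (r + t - 1) m) (d (sp_inv r i m))) = S cfg + ix (td i) (cfg (VE a (b - 1)))" .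
  show ?thesis unfolding HH_def HH_split pa_sigma[OF i] o j by simp
qed

lemma HH3:
  assumes cfg: "cfg \<in> configs n P Q bc" "cfg_weight q u w P Q cfg \<noteq> 0" and i: "i < t"
  shows "HH Q bc cfg k (\<lambda>j. A j - ebox r r j) (\<lambda>j. B j - ebox (r + 1) (r + t - 1) j)
      (perm_act (sigma_plus r (r + i) \<circ> \<pi>) c) = X cfg + S cfg + ix (td i) (cfg (VE a (b - 1))) + ix (td i) (cfg (HE (a - 1) b))"
proof -
  have o: "(\<Sum>m\<in>Oset. height Q bc cfg (A m - ebox r r m, B m - ebox (r + 1) (r + t - 1) m) (d (sp_inv r i m))) = X cfg"
    unfolding X_def by (rule sum.cong[OF refl]) (frule ebox0, simp add: spinv_O i)
  have "(\<Sum>m\<in>J. height Q bc cfg (A m - ebox r r m, B m - ebox (r + 1) (r + t - 1) m) (d (sp_inv r i m)))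
      = (\<Sum>m\<in>J. height Q bc cfg (a, b - 1) (d (sp_inv r i m)) + (if m = r then ix (d (sp_inv r i m)) (cfg (VE a (b - 1))) + ix (d (sp_inv r i m)) (cfg (HE (a - 1) b)) else 0))"
  proof (rule sum.cong[OF refl])
    fix m assume m: "m \<in> J"
    show "height Q bc cfg (A m - ebox r r m, B m - ebox (r + 1) (r + t - 1) m) (d (sp_inv r i m))
      = height Q bc cfg (a, b - 1) (d (sp_inv r i m)) + (if m = r then ix (d (sp_inv r i m)) (cfg (VE a (b - 1))) + ix (d (sp_inv r i m)) (cfg (HE (a - 1) b)) else 0)"
      using ebox1[OF m] inJ[OF m] hLL[OF cfg] hUL by (cases "m = r") auto
  qed
  also have "\<dots> = S cfg + (ix (td i) (cfg (VE a (b - 1))) + ix (td i) (cfg (HE (a - 1) b)))"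
    using S_reindex[OF i] r_J by (simp add: sum.distrib spinv_r td_def J_def)
  finally have j: "(\<Sum>m\<in>J. height Q bc cfg (A m - ebox r r m, B m - ebox (r + 1) (r + t - 1) m) (d (sp_inv r i m))) = S cfg + (ix (td i) (cfg (VE a (b - 1))) + ix (td i) (cfg (HE (a - 1) b)))" .
  show ?thesis unfolding HH_def HH_split pa_sigma[OF i] o j by simp
qed

lemma len_sigma:
  assumes "i < t"
  shows "perm_length k (sigma_plus r (r + i) \<circ> \<pi>) = perm_length k \<pi> + i"
proof -
  have p1: "sigma_plus r (r + i) permutes {1..k}" using sigma_plus_permutes[of r i k] rt assms by auto
  have o: "ordered_on r (r + i) \<pi>" using ord assms unfolding ordered_on_def by auto
  show ?thesis
    using perm_length_ninv[OF permutes_compose[OF perm p1]] perm_length_ninv[OF perm]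
      ninv_sigma_plus[OF perm rt(1) _ o] assms rt by simp
qed

end

lemma ind_ix: "ind x e = ix e x" by (simp add: ind_def ix_def)

context S53 begin

definition "C1 = (Qc - Qc ^ t * z) / (Qc - z)"
definition "C2 = (Qc * z - 1) / (Qc - z)"
definition "C3 = (1 - z) / (Qc - z)"

definition Phi :: "(edge \<Rightarrow> nat) \<Rightarrow> complex" where
  "Phi cfg =
    Qc ^ perm_length k \<pi> * Qc ^ HH Q bc cfg k A B (perm_act \<pi> c)
    - C1 * Qc ^ perm_length k \<pi> * Qc ^ HH Q bc cfg k A (\<lambda>i. B i - ebox r (r + t - 1) i) (perm_act \<pi> c)
    - (\<Sum>i=0..t-1. C2 * Qc ^ perm_length k (sigma_plus r (r + i) \<circ> \<pi>)
         * Qc ^ HH Q bc cfg k (\<lambda>j. A j - ebox r r j) (\<lambda>j. B j - ebox r (r + t - 1) j)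
             (perm_act (sigma_plus r (r + i) \<circ> \<pi>) c))
    - (\<Sum>i=0..t-1. C3 * Qc ^ perm_length k (sigma_plus r (r + i) \<circ> \<pi>)
         * Qc ^ HH Q bc cfg k (\<lambda>j. A j - ebox r r j) (\<lambda>j. B j - ebox (r + 1) (r + t - 1) j)
             (perm_act (sigma_plus r (r + i) \<circ> \<pi>) c))"

lemma ivl_t: "{0..t-1} = {..<t}" using rt by auto

lemma Phi_eq:
  assumes cfg: "cfg \<in> configs n P Q bc" "cfg_weight q u w P Q cfg \<noteq> 0"
  shows "Phi cfg = K cfg * BrC Qc z t td (cfg (HE a b)) (cfg (VE a (b - 1))) (cfg (HE (a - 1) b))"
proof -
  define L where "L = Qc ^ perm_length k \<pi>"
  define E where "E = Qc ^ (X cfg + S cfg)"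
  define ic where "ic = cfg (VE a (b - 1))"
  define jc where "jc = cfg (HE (a - 1) b)"
  define lc where "lc = cfg (HE a b)"
  have t0: "Qc ^ perm_length k \<pi> * Qc ^ HH Q bc cfg k A B (perm_act \<pi> c) = L * E * Qc ^ Nf t td (int lc)"
    unfolding d_def[symmetric] HH0 L_def E_def lc_def by (simp add: power_add)
  have t1: "C1 * Qc ^ perm_length k \<pi> * Qc ^ HH Q bc cfg k A (\<lambda>i. B i - ebox r (r + t - 1) i) (perm_act \<pi> c) = L * E * C1"
    unfolding d_def[symmetric] HH1 L_def E_def by simp
  have t2: "(\<Sum>i=0..t-1. C2 * Qc ^ perm_length k (sigma_plus r (r + i) \<circ> \<pi>)
         * Qc ^ HH Q bc cfg k (\<lambda>j. A j - ebox r r j) (\<lambda>j. B j - ebox r (r + t - 1) j)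
             (perm_act (sigma_plus r (r + i) \<circ> \<pi>) c))
      = L * E * (\<Sum>m<t. C2 * (Qc ^ m * Qc ^ ind ic (td m)))"
    unfolding ivl_t sum_distrib_left
  proof (rule sum.cong[OF refl])
    fix i assume "i \<in> {..<t}"
    then have i: "i < t" by simp
    show "C2 * Qc ^ perm_length k (sigma_plus r (r + i) \<circ> \<pi>)
         * Qc ^ HH Q bc cfg k (\<lambda>j. A j - ebox r r j) (\<lambda>j. B j - ebox r (r + t - 1) j)
             (perm_act (sigma_plus r (r + i) \<circ> \<pi>) c)
      = L * E * (C2 * (Qc ^ i * Qc ^ ind ic (td i)))"
      unfolding HH2[OF cfg i] len_sigma[OF i] L_def E_def ic_def ind_ix by (simp add: power_add)
  qed
  have t3: "(\<Sum>i=0..t-1. C3 * Qc ^ perm_length k (sigma_plus r (r + i) \<circ> \<pi>)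
         * Qc ^ HH Q bc cfg k (\<lambda>j. A j - ebox r r j) (\<lambda>j. B j - ebox (r + 1) (r + t - 1) j)
             (perm_act (sigma_plus r (r + i) \<circ> \<pi>) c))
      = L * E * (\<Sum>m<t. C3 * (Qc ^ m * Qc ^ (ind ic (td m) + ind jc (td m))))"
    unfolding ivl_t sum_distrib_left
  proof (rule sum.cong[OF refl])
    fix i assume "i \<in> {..<t}"
    then have i: "i < t" by simp
    show "C3 * Qc ^ perm_length k (sigma_plus r (r + i) \<circ> \<pi>)
         * Qc ^ HH Q bc cfg k (\<lambda>j. A j - ebox r r j) (\<lambda>j. B j - ebox (r + 1) (r + t - 1) j)
             (perm_act (sigma_plus r (r + i) \<circ> \<pi>) c)
      = L * E * (C3 * (Qc ^ i * Qc ^ (ind ic (td i) + ind jc (td i))))"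
      unfolding HH3[OF cfg i] len_sigma[OF i] L_def E_def ic_def jc_def ind_ix by (simp add: power_add)
  qed
  have "Phi cfg = L * E * Qc ^ Nf t td (int lc) - L * E * C1
      - L * E * (\<Sum>m<t. C2 * (Qc ^ m * Qc ^ ind ic (td m)))
      - L * E * (\<Sum>m<t. C3 * (Qc ^ m * Qc ^ (ind ic (td m) + ind jc (td m))))"
    unfolding Phi_def t0 t1 t2 t3 ..
  also have "\<dots> = L * E * BrC Qc z t td lc ic jc"
    unfolding BrC_def C1_def C2_def C3_def by (simp add: algebra_simps)
  finally show ?thesis unfolding K_def L_def E_def lc_def ic_def jc_def by simp
qed

end

context S53 begin

definition gT :: "(edge \<Rightarrow> nat) \<Rightarrow> (edge \<Rightarrow> nat)" where
  "gT cfg = (\<lambda>e. if e \<in> T then 0 else cfg e)"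

lemma fiber:
  assumes c1: "cfg1 \<in> configs n P Q bc"
  shows "{x \<in> configs n P Q bc. gT x = gT cfg1} = Ext n T (gT cfg1)"
proof (rule set_eqI)
  fix x
  show "x \<in> {x \<in> configs n P Q bc. gT x = gT cfg1} \<longleftrightarrow> x \<in> Ext n T (gT cfg1)"
  proof
    assume "x \<in> {x \<in> configs n P Q bc. gT x = gT cfg1}"
    then have x: "x \<in> configs n P Q bc" "gT x = gT cfg1" by auto
    have "\<forall>e. e \<notin> T \<longrightarrow> x e = gT cfg1 e"
    proof (intro allI impI)
      fix e assume "e \<notin> T"
      then show "x e = gT cfg1 e" using fun_cong[OF x(2), of e] by (simp add: gT_def)
    qed
    moreover have "\<forall>e\<in>T. x e \<le> n" using x(1) T_model unfolding configs_def by auto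
    ultimately show "x \<in> Ext n T (gT cfg1)" unfolding Ext_def by simp
  next
    assume x: "x \<in> Ext n T (gT cfg1)"
    then have off: "\<And>e. e \<notin> T \<Longrightarrow> x e = cfg1 e" and on: "\<And>e. e \<in> T \<Longrightarrow> x e \<le> n"
      unfolding Ext_def gT_def by auto
    have "x \<in> configs n P Q bc"
      unfolding configs_def
    proof (intro CollectI conjI allI impI ballI)
      fix e assume "e \<notin> model_edges P Q"
      then have "e \<notin> T" using T_model by auto
      then show "x e = 0" using off c1 \<open>e \<notin> model_edges P Q\<close> unfolding configs_def by auto
    next
      fix e assume "e \<in> model_edges P Q"
      then show "x e \<le> n" using off on c1 unfolding configs_def by (cases "e \<in> T") auto
    next
      fix j assume "Suc j < length Q"
      then show "x (step_edge Q j) = bc j" using off T_step c1 unfolding configs_def by auto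
    qed
    moreover have "gT x = gT cfg1" unfolding gT_def using off by auto
    ultimately show "x \<in> {x \<in> configs n P Q bc. gT x = gT cfg1}" by simp
  qed
qed

lemma T_ins: "T = insert (VE a b) (insert (HE a b) (outs D'))"
  unfolding T_def D_ins outs_def by auto

lemma VE_notin: "VE a b \<notin> insert (HE a b) (outs D')" using ab_nD' unfolding outs_def by auto
lemma HE_notin: "HE a b \<notin> outs D'" using ab_nD' unfolding outs_def by auto

lemma model_le: "cfg1 \<in> configs n P Q bc \<Longrightarrow> e \<in> model_edges P Q \<Longrightarrow> gT cfg1 e \<le> n"
  unfolding configs_def gT_def by auto

lemma in_edges_model: "s \<in> region_vertices P Q \<Longrightarrow> VE (fst s) (snd s - 1) \<in> model_edges P Q \<and> HE (fst s - 1) (snd s) \<in> model_edges P Q"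
  unfolding model_edges_def vertex_edges_def by auto

lemma fiber_zero:
  assumes c1: "cfg1 \<in> configs n P Q bc"
  shows "(\<Sum>cfg\<in>Ext n T (gT cfg1). cfg_weight q u w P Q cfg *
      (K cfg * BrC Qc z t td (cfg (HE a b)) (cfg (VE a (b - 1))) (cfg (HE (a - 1) b)))) = 0"
proof -
  define c0 where "c0 = gT cfg1"
  define G where "G cfg = cfg_weight q u w P Q cfg *
      (K cfg * BrC Qc z t td (cfg (HE a b)) (cfg (VE a (b - 1))) (cfg (HE (a - 1) b)))" for cfg
  have fD': "finite (outs D')" using outs_finite[OF D'_fin] .
  have ic_nT: "VE a (b - 1) \<notin> T" using VE_T by force
  have jc_nT: "HE (a - 1) b \<notin> T" using HE_T by force
  have icm: "VE a (b - 1) \<in> model_edges P Q" and jcm: "HE (a - 1) b \<in> model_edges P Q"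
    using in_edges_model[OF v] unfolding a_def b_def by auto
  define ic where "ic = c0 (VE a (b - 1))"
  define jc where "jc = c0 (HE (a - 1) b)"
  have icn: "ic \<le> n" unfolding ic_def c0_def using model_le[OF c1 icm] .
  have jcn: "jc \<le> n" unfolding jc_def c0_def using model_le[OF c1 jcm] .
  have inner: "(\<Sum>cfg\<in>Ext n (outs D') (c0(VE a b := m1, HE a b := m2)). G cfg)
      = Wout c0 * K c0 * (R z Qc ic jc m1 m2 * BrC Qc z t td m2 ic jc)"
    if m: "m1 \<le> n" "m2 \<le> n" for m1 m2
  proof -
    define c1' where "c1' = c0(VE a b := m1, HE a b := m2)"
    have Gc: "G cfg = Wout c0 * K c0 * (R z Qc ic jc m1 m2 * BrC Qc z t td m2 ic jc) * (\<Prod>s\<in>D'. vw zf Qc cfg s)"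
      if cfg: "cfg \<in> Ext n (outs D') c1'" for cfg
    proof -
      have ag: "agree cfg c0"
        unfolding agree_def
      proof (intro allI impI)
        fix e assume "e \<notin> T"
        then have "e \<notin> outs D'" "e \<noteq> VE a b" "e \<noteq> HE a b" unfolding T_ins by auto
        then show "cfg e = c0 e" using cfg unfolding Ext_def c1'_def by auto
      qed
      have ve: "cfg (VE a b) = m1" using cfg VE_notin unfolding Ext_def c1'_def by auto
      have he: "cfg (HE a b) = m2" using cfg HE_notin unfolding Ext_def c1'_def by auto
      have icq: "cfg (VE a (b - 1)) = ic" using ag ic_nT unfolding agree_def ic_def by auto
      have jcq: "cfg (HE (a - 1) b) = jc" using ag jc_nT unfolding agree_def jc_def by auto
      have zab: "zf (a, b) = z" unfolding zf_def z a_def b_def by simp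
      have "vw zf Qc cfg (a, b) = R z Qc ic jc m1 m2" unfolding vw_def zab using ve he icq jcq by simp
      then show ?thesis unfolding G_def weight_split Wout_cong[OF ag] K_cong[OF ag] he icq jcq
        by (simp add: algebra_simps)
    qed
    have one: "(\<Sum>cfg\<in>Ext n (outs D') c1'. \<Prod>s\<in>D'. vw zf Qc cfg s) = 1"
    proof (rule sum_to_one[OF D'_fin])
      show "\<forall>s\<in>D'. zf s \<noteq> Qc" using rap D'_sub unfolding zf_def by auto
      show "\<forall>s\<in>D'. \<forall>e\<in>{VE (fst s) (snd s - 1), HE (fst s - 1) (snd s)}. e \<notin> outs D' \<longrightarrow> c1' e \<le> n"
      proof (intro ballI impI)
        fix s e assume s: "s \<in> D'" and e: "e \<in> {VE (fst s) (snd s - 1), HE (fst s - 1) (snd s)}" and "e \<notin> outs D'"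
        have "e \<in> model_edges P Q" using in_edges_model[of s] s D'_sub e by auto
        then have "c0 e \<le> n" unfolding c0_def using model_le[OF c1] by simp
        then show "c1' e \<le> n" unfolding c1'_def using m by auto
      qed
    qed
    have "(\<Sum>cfg\<in>Ext n (outs D') c1'. G cfg)
        = (\<Sum>cfg\<in>Ext n (outs D') c1'. Wout c0 * K c0 * (R z Qc ic jc m1 m2 * BrC Qc z t td m2 ic jc) * (\<Prod>s\<in>D'. vw zf Qc cfg s))"
      by (rule sum.cong[OF refl]) (rule Gc)
    also have "\<dots> = Wout c0 * K c0 * (R z Qc ic jc m1 m2 * BrC Qc z t td m2 ic jc)"
      unfolding sum_distrib_left[symmetric] one by simp
    finally show ?thesis unfolding c1'_def .
  qed
  have "(\<Sum>cfg\<in>Ext n T c0. G cfg)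
      = (\<Sum>m1\<le>n. \<Sum>m2\<le>n. \<Sum>cfg\<in>Ext n (outs D') (c0(VE a b := m1, HE a b := m2)). G cfg)"
    unfolding T_ins Ext_insert2[OF VE_notin finite_insert[THEN iffD2, OF fD']] Ext_insert2[OF HE_notin fD'] ..
  also have "\<dots> = (\<Sum>m1\<le>n. \<Sum>m2\<le>n. Wout c0 * K c0 * (R z Qc ic jc m1 m2 * BrC Qc z t td m2 ic jc))"
    by (intro sum.cong refl) (simp add: inner)
  also have "\<dots> = Wout c0 * K c0 * (\<Sum>m1\<le>n. \<Sum>m2\<le>n. R z Qc ic jc m1 m2 * BrC Qc z t td m2 ic jc)"
    by (simp add: sum_distrib_left)
  also have "(\<Sum>m1\<le>n. \<Sum>m2\<le>n. R z Qc ic jc m1 m2 * BrC Qc z t td m2 ic jc) = 0"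
    by (rule local_identity[OF td_sorted zq Q1 icn jcn])
  finally show ?thesis unfolding G_def c0_def by simp
qed

lemma main_zero:
  "(\<Sum>cfg\<in>configs n P Q bc. cfg_weight q u w P Q cfg *
      (K cfg * BrC Qc z t td (cfg (HE a b)) (cfg (VE a (b - 1))) (cfg (HE (a - 1) b)))) = 0"
proof -
  define G where "G cfg = cfg_weight q u w P Q cfg *
      (K cfg * BrC Qc z t td (cfg (HE a b)) (cfg (VE a (b - 1))) (cfg (HE (a - 1) b)))" for cfg
  have "(\<Sum>cfg\<in>configs n P Q bc. G cfg) = (\<Sum>c0\<in>gT ` configs n P Q bc. \<Sum>cfg\<in>{x \<in> configs n P Q bc. gT x = c0}. G cfg)"
    by (rule sum.group[symmetric]) (use configs_finite in auto)
  also have "\<dots> = (\<Sum>c0\<in>gT ` configs n P Q bc. 0)"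
  proof (rule sum.cong[OF refl])
    fix c0 assume "c0 \<in> gT ` configs n P Q bc"
    then obtain cfg1 where c1: "cfg1 \<in> configs n P Q bc" "c0 = gT cfg1" by auto
    show "(\<Sum>cfg\<in>{x \<in> configs n P Q bc. gT x = c0}. G cfg) = 0"
      unfolding c1(2) fiber[OF c1(1)] G_def by (rule fiber_zero[OF c1(1)])
  qed
  finally show ?thesis unfolding G_def by simp
qed

end

context S53 begin

lemma expansion:
  "(\<Sum>cfg\<in>configs n P Q bc. cfg_weight q u w P Q cfg * Phi cfg) =
     Qc ^ perm_length k \<pi> * EqH n q u w P Q bc k A B (perm_act \<pi> c)
   - C1 * Qc ^ perm_length k \<pi> * EqH n q u w P Q bc k A (\<lambda>i. B i - ebox r (r + t - 1) i) (perm_act \<pi> c)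
   - (\<Sum>i=0..t-1. C2 * Qc ^ perm_length k (sigma_plus r (r + i) \<circ> \<pi>)
         * EqH n q u w P Q bc k (\<lambda>j. A j - ebox r r j) (\<lambda>j. B j - ebox r (r + t - 1) j)
             (perm_act (sigma_plus r (r + i) \<circ> \<pi>) c))
   - (\<Sum>i=0..t-1. C3 * Qc ^ perm_length k (sigma_plus r (r + i) \<circ> \<pi>)
         * EqH n q u w P Q bc k (\<lambda>j. A j - ebox r r j) (\<lambda>j. B j - ebox (r + 1) (r + t - 1) j)
             (perm_act (sigma_plus r (r + i) \<circ> \<pi>) c))"
proof -
  define W where "W cfg = cfg_weight q u w P Q cfg" for cfg
  define Cf where "Cf = configs n P Q bc"
  have E: "EqH n q u w P Q bc k A' B' d' = (\<Sum>cfg\<in>Cf. W cfg * Qc ^ HH Q bc cfg k A' B' d')" for A' B' d'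
    unfolding EqH_def sc6v_expect_def W_def Cf_def ..
  have dbl: "(\<Sum>cfg\<in>Cf. W cfg * (\<Sum>i=0..t-1. Cc * f i * g i cfg)) = (\<Sum>i=0..t-1. Cc * f i * (\<Sum>cfg\<in>Cf. W cfg * g i cfg))"
    for Cc :: complex and f :: "nat \<Rightarrow> complex" and g
  proof -
    have "(\<Sum>cfg\<in>Cf. W cfg * (\<Sum>i=0..t-1. Cc * f i * g i cfg)) = (\<Sum>cfg\<in>Cf. \<Sum>i=0..t-1. Cc * f i * (W cfg * g i cfg))"
      by (simp add: sum_distrib_left mult.left_commute)
    also have "\<dots> = (\<Sum>i=0..t-1. \<Sum>cfg\<in>Cf. Cc * f i * (W cfg * g i cfg))" by (rule sum.swap)
    also have "\<dots> = (\<Sum>i=0..t-1. Cc * f i * (\<Sum>cfg\<in>Cf. W cfg * g i cfg))" by (simp add: sum_distrib_left)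
    finally show ?thesis .
  qed
  have sgl: "(\<Sum>cfg\<in>Cf. W cfg * (Cc * g cfg)) = Cc * (\<Sum>cfg\<in>Cf. W cfg * g cfg)" for Cc :: complex and g
    by (simp add: sum_distrib_left mult.left_commute)
  have s1: "(\<Sum>cfg\<in>Cf. W cfg * Phi cfg) = (\<Sum>cfg\<in>Cf. W cfg * (Qc ^ perm_length k \<pi> * Qc ^ HH Q bc cfg k A B (perm_act \<pi> c)))
      - (\<Sum>cfg\<in>Cf. W cfg * (C1 * Qc ^ perm_length k \<pi> * Qc ^ HH Q bc cfg k A (\<lambda>i. B i - ebox r (r + t - 1) i) (perm_act \<pi> c)))
      - (\<Sum>cfg\<in>Cf. W cfg * (\<Sum>i=0..t-1. C2 * Qc ^ perm_length k (sigma_plus r (r + i) \<circ> \<pi>) * Qc ^ HH Q bc cfg k (\<lambda>j. A j - ebox r r j) (\<lambda>j. B j - ebox r (r + t - 1) j) (perm_act (sigma_plus r (r + i) \<circ> \<pi>) c)))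
      - (\<Sum>cfg\<in>Cf. W cfg * (\<Sum>i=0..t-1. C3 * Qc ^ perm_length k (sigma_plus r (r + i) \<circ> \<pi>) * Qc ^ HH Q bc cfg k (\<lambda>j. A j - ebox r r j) (\<lambda>j. B j - ebox (r + 1) (r + t - 1) j) (perm_act (sigma_plus r (r + i) \<circ> \<pi>) c)))"
    by (simp only: Phi_def right_diff_distrib sum_subtractf)
  have p0: "(\<Sum>cfg\<in>Cf. W cfg * (Qc ^ perm_length k \<pi> * Qc ^ HH Q bc cfg k A B (perm_act \<pi> c))) = Qc ^ perm_length k \<pi> * EqH n q u w P Q bc k A B (perm_act \<pi> c)"
    unfolding E by (rule sgl)
  have p1: "(\<Sum>cfg\<in>Cf. W cfg * (C1 * Qc ^ perm_length k \<pi> * Qc ^ HH Q bc cfg k A (\<lambda>i. B i - ebox r (r + t - 1) i) (perm_act \<pi> c))) = C1 * Qc ^ perm_length k \<pi> * EqH n q u w P Q bc k A (\<lambda>i. B i - ebox r (r + t - 1) i) (perm_act \<pi> c)"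
    unfolding E by (rule sgl)
  have p2: "(\<Sum>cfg\<in>Cf. W cfg * (\<Sum>i=0..t-1. C2 * Qc ^ perm_length k (sigma_plus r (r + i) \<circ> \<pi>) * Qc ^ HH Q bc cfg k (\<lambda>j. A j - ebox r r j) (\<lambda>j. B j - ebox r (r + t - 1) j) (perm_act (sigma_plus r (r + i) \<circ> \<pi>) c))) = (\<Sum>i=0..t-1. C2 * Qc ^ perm_length k (sigma_plus r (r + i) \<circ> \<pi>) * EqH n q u w P Q bc k (\<lambda>j. A j - ebox r r j) (\<lambda>j. B j - ebox r (r + t - 1) j) (perm_act (sigma_plus r (r + i) \<circ> \<pi>) c))"
    unfolding E by (rule dbl)
  have p3: "(\<Sum>cfg\<in>Cf. W cfg * (\<Sum>i=0..t-1. C3 * Qc ^ perm_length k (sigma_plus r (r + i) \<circ> \<pi>) * Qc ^ HH Q bc cfg k (\<lambda>j. A j - ebox r r j) (\<lambda>j. B j - ebox (r + 1) (r + t - 1) j) (perm_act (sigma_plus r (r + i) \<circ> \<pi>) c))) = (\<Sum>i=0..t-1. C3 * Qc ^ perm_length k (sigma_plus r (r + i) \<circ> \<pi>) * EqH n q u w P Q bc k (\<lambda>j. A j - ebox r r j) (\<lambda>j. B j - ebox (r + 1) (r + t - 1) j) (perm_act (sigma_plus r (r + i) \<circ> \<pi>) c))"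
    unfolding E by (rule dbl)
  show ?thesis unfolding W_def[symmetric] Cf_def[symmetric] s1 p0 p1 p2 p3 ..
qed

lemma rearr: "(x::complex) - a1 - a2 - a3 = 0 \<Longrightarrow> x = a1 + a2 + a3"
  by (simp add: algebra_simps)

lemma final:
  "Qc ^ perm_length k \<pi> * EqH n q u w P Q bc k A B (perm_act \<pi> c)
   = C1 * Qc ^ perm_length k \<pi> * EqH n q u w P Q bc k A (\<lambda>i. B i - ebox r (r + t - 1) i) (perm_act \<pi> c)
   + (\<Sum>i=0..t-1. C2 * Qc ^ perm_length k (sigma_plus r (r + i) \<circ> \<pi>)
         * EqH n q u w P Q bc k (\<lambda>j. A j - ebox r r j) (\<lambda>j. B j - ebox r (r + t - 1) j)
             (perm_act (sigma_plus r (r + i) \<circ> \<pi>) c))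
   + (\<Sum>i=0..t-1. C3 * Qc ^ perm_length k (sigma_plus r (r + i) \<circ> \<pi>)
         * EqH n q u w P Q bc k (\<lambda>j. A j - ebox r r j) (\<lambda>j. B j - ebox (r + 1) (r + t - 1) j)
             (perm_act (sigma_plus r (r + i) \<circ> \<pi>) c))"
proof -
  have "(\<Sum>cfg\<in>configs n P Q bc. cfg_weight q u w P Q cfg * Phi cfg)
      = (\<Sum>cfg\<in>configs n P Q bc. cfg_weight q u w P Q cfg *
      (K cfg * BrC Qc z t td (cfg (HE a b)) (cfg (VE a (b - 1))) (cfg (HE (a - 1) b))))"
  proof (rule sum.cong[OF refl])
    fix cfg assume cfg: "cfg \<in> configs n P Q bc"
    show "cfg_weight q u w P Q cfg * Phi cfg = cfg_weight q u w P Q cfg *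
      (K cfg * BrC Qc z t td (cfg (HE a b)) (cfg (VE a (b - 1))) (cfg (HE (a - 1) b)))"
    proof (cases "cfg_weight q u w P Q cfg = 0")
      case True then show ?thesis by simp
    next
      case False then show ?thesis by (simp only: Phi_eq[OF cfg False])
    qed
  qed
  then have "(\<Sum>cfg\<in>configs n P Q bc. cfg_weight q u w P Q cfg * Phi cfg) = 0" using main_zero by simp
  then show ?thesis unfolding expansion by (rule rearr)
qed

end

theorem proposition5p3:
  fixes n :: nat and q :: real and u w :: "int \<Rightarrow> complex"
    and P Q :: "(int \<times> int) list" and bc :: "nat \<Rightarrow> nat"
    and k r t :: nat and A B c :: "nat \<Rightarrow> int" and \<pi> :: "nat \<Rightarrow> nat" and z :: complex
  assumes q: "0 < q" "q < 1"
    and dom: "skew_domain P Q"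
    and bc_mono: "\<forall>i j. i \<le> j \<and> Suc j < length Q \<longrightarrow> bc i \<le> bc j"
    and bc_le: "\<forall>j. Suc j < length Q \<longrightarrow> bc j \<le> n"
    and rap: "\<forall>v\<in>region_vertices P Q. w (fst v) \<noteq> 0 \<and> u (snd v) / w (fst v) \<noteq> complex_of_real q"
    and rt: "1 \<le> r" "1 \<le> t" "r + t - 1 \<le> k"
    and A_mono: "\<forall>i j. 1 \<le> i \<and> i \<le> j \<and> j \<le> k \<longrightarrow> A i \<le> A j"
    and A_eq: "\<forall>i. r \<le> i \<and> i \<le> r + t - 1 \<longrightarrow> A i = A r"
    and A_lt1: "1 < r \<longrightarrow> A (r - 1) < A r"
    and A_lt2: "r + t \<le> k \<longrightarrow> A (r + t - 1) < A (r + t)"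
    and B_mono: "\<forall>i j. 1 \<le> i \<and> i \<le> j \<and> j \<le> k \<longrightarrow> B j \<le> B i"
    and B_eq: "\<forall>i. r \<le> i \<and> i \<le> r + t - 1 \<longrightarrow> B i = B r"
    and B_lt1: "1 < r \<longrightarrow> B r < B (r - 1)"
    and B_lt2: "r + t \<le> k \<longrightarrow> B (r + t) < B (r + t - 1)"
    and c_mono: "\<forall>i j. 1 \<le> i \<and> i \<le> j \<and> j \<le> k \<longrightarrow> c i \<le> c j"
    and pts: "\<forall>i. 1 \<le> i \<and> i \<le> k \<longrightarrow> (A i, B i) \<in> region_faces P Q"
    and v: "(A r, B r) \<in> region_vertices P Q"
    and z: "z = u (B r) / w (A r)"
    and perm: "\<pi> permutes {1..k}"
    and ord: "ordered_on r (r + t - 1) \<pi>"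
  shows
    "complex_of_real q ^ perm_length k \<pi> * EqH n q u w P Q bc k A B (perm_act \<pi> c) =
       (complex_of_real q - complex_of_real q ^ t * z) / (complex_of_real q - z)
         * complex_of_real q ^ perm_length k \<pi>
         * EqH n q u w P Q bc k A (\<lambda>i. B i - ebox r (r + t - 1) i) (perm_act \<pi> c)
     + (\<Sum>i=0..t-1. (complex_of_real q * z - 1) / (complex_of_real q - z)
         * complex_of_real q ^ perm_length k (sigma_plus r (r + i) \<circ> \<pi>)
         * EqH n q u w P Q bc k (\<lambda>j. A j - ebox r r j) (\<lambda>j. B j - ebox r (r + t - 1) j)
             (perm_act (sigma_plus r (r + i) \<circ> \<pi>) c))
     + (\<Sum>i=0..t-1. (1 - z) / (complex_of_real q - z)
         * complex_of_real q ^ perm_length k (sigma_plus r (r + i) \<circ> \<pi>)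
         * EqH n q u w P Q bc k (\<lambda>j. A j - ebox r r j) (\<lambda>j. B j - ebox (r + 1) (r + t - 1) j)
             (perm_act (sigma_plus r (r + i) \<circ> \<pi>) c))"
proof -
  interpret S53 n q u w P Q bc k r t A B c \<pi> z
    by (unfold_locales; fact assms)
  show ?thesis using final unfolding C1_def C2_def C3_def .
qed

end
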